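(* Let $G$ be a cubic bipartite connected graph and $K$ a constant. Then $G$ admits a TSP-tour of length at most $K$ if and only if $G$ admits a $\tfrac12$-tour of length $K$.
   Context: Continuous graph model: for a connected simple graph $G$, each edge $uv$ is viewed as a unit-length interval whose endpoints are the vertices $u,v$. $P(G)$ is the set of all points $p(u,v,\lambda)$ for $uv\in E(G)$, $\lambda\in[0,1]$, where $p(u,v,\lambda)=p(v,u,1-\lambda)$, $p(u,v,0)=u$, $p(u,v,1)=v$. A walk is a finite sequence of points $(p_0,\dots,p_z)$ in which any two consecutive points are distinct and lie on a common edge $uv$, say $p_{i-1}=p(u,v,\lambda)$, $p_i=p(u,v,\mu)$; this step has length $|\lambda-\mu|$ and covers all points of that edge between them. The length of a walk is the sum of the lengths of its steps; $d(p,q)$ is the minimum length of a walk from $p$ to $q$. A tour is a walk with $p_0=p_z$; the points of the tour are all points covered by its steps. For $\delta\ge 0$, a $\delta$-tour is a tour $T$ such that every $p\in P(G)$ has distance at most $\delta$ from some point of $T$. A TSP-tour of $G$ is a closed walk in $G$ (a tour all of whose points $p_i$ are vertices) visiting every vertex of $G$; its length is the number of edge traversals. *)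

theory Defs
  imports Complex_Main
begin

definition simple_graph :: "'a set \<Rightarrow> ('a \<Rightarrow> 'a \<Rightarrow> bool) \<Rightarrow> bool" where
  "simple_graph V E \<longleftrightarrow> finite V \<and> (\<forall>u v. E u v \<longrightarrow> u \<in> V \<and> v \<in> V \<and> u \<noteq> v \<and> E v u)"

definition connected_graph :: "'a set \<Rightarrow> ('a \<Rightarrow> 'a \<Rightarrow> bool) \<Rightarrow> bool" where
  "connected_graph V E \<longleftrightarrow> V \<noteq> {} \<and> (\<forall>u\<in>V. \<forall>v\<in>V. (u, v) \<in> {(x, y). E x y}\<^sup>*)"

definition cubic :: "'a set \<Rightarrow> ('a \<Rightarrow> 'a \<Rightarrow> bool) \<Rightarrow> bool" where
  "cubic V E \<longleftrightarrow> (\<forall>v\<in>V. card {w. E v w} = 3)"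

definition bipartite :: "'a set \<Rightarrow> ('a \<Rightarrow> 'a \<Rightarrow> bool) \<Rightarrow> bool" where
  "bipartite V E \<longleftrightarrow> (\<exists>A. A \<subseteq> V \<and> (\<forall>u v. E u v \<longrightarrow> (u \<in> A \<longleftrightarrow> v \<notin> A)))"

definition tsp_tour :: "'a set \<Rightarrow> ('a \<Rightarrow> 'a \<Rightarrow> bool) \<Rightarrow> 'a list \<Rightarrow> bool" where
  "tsp_tour V E vs \<longleftrightarrow> vs \<noteq> [] \<and> hd vs = last vs
     \<and> (\<forall>i. Suc i < length vs \<longrightarrow> E (vs ! i) (vs ! Suc i)) \<and> V \<subseteq> set vs"

definition tsp_length :: "'a list \<Rightarrow> nat" where
  "tsp_length vs = length vs - 1"

text \<open>Points of P(G): a vertex, or an interior point of an edge, stored canonically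
  as (u, v, lambda) with u < v and 0 < lambda < 1.\<close>

datatype 'a point = Vert 'a | Mid 'a 'a real

definition pt :: "'a::linorder \<Rightarrow> 'a \<Rightarrow> real \<Rightarrow> 'a point" where
  "pt u v l = (if l \<le> 0 then Vert u else if 1 \<le> l then Vert v
               else if u < v then Mid u v l else Mid v u (1 - l))"

definition Pts :: "('a::linorder \<Rightarrow> 'a \<Rightarrow> bool) \<Rightarrow> 'a point set" where
  "Pts E = {pt u v l | u v l. E u v \<and> 0 \<le> l \<and> l \<le> 1}"

text \<open>A step (u, v, lambda, mu) goes from p(u,v,lambda) to p(u,v,mu) along edge uv.
  A walk (p0,...,pz) is represented by its list of steps.\<close>

type_synonym 'a step = "'a \<times> 'a \<times> real \<times> real"

definition valid_step :: "('a \<Rightarrow> 'a \<Rightarrow> bool) \<Rightarrow> 'a step \<Rightarrow> bool" where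
  "valid_step E s = (case s of (u, v, l, m) \<Rightarrow>
     E u v \<and> 0 \<le> l \<and> l \<le> 1 \<and> 0 \<le> m \<and> m \<le> 1 \<and> l \<noteq> m)"

definition step_start :: "'a::linorder step \<Rightarrow> 'a point" where
  "step_start s = (case s of (u, v, l, m) \<Rightarrow> pt u v l)"

definition step_end :: "'a::linorder step \<Rightarrow> 'a point" where
  "step_end s = (case s of (u, v, l, m) \<Rightarrow> pt u v m)"

definition step_len :: "'a step \<Rightarrow> real" where
  "step_len s = (case s of (u, v, l, m) \<Rightarrow> \<bar>l - m\<bar>)"

definition step_cover :: "'a::linorder step \<Rightarrow> 'a point set" where
  "step_cover s = (case s of (u, v, l, m) \<Rightarrow> {pt u v t | t. min l m \<le> t \<and> t \<le> max l m})"

definition is_walk :: "('a::linorder \<Rightarrow> 'a \<Rightarrow> bool) \<Rightarrow> 'a step list \<Rightarrow> bool" where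
  "is_walk E ss \<longleftrightarrow> (\<forall>s\<in>set ss. valid_step E s)
     \<and> (\<forall>i. Suc i < length ss \<longrightarrow> step_end (ss ! i) = step_start (ss ! Suc i))"

definition walk_from_to :: "('a::linorder \<Rightarrow> 'a \<Rightarrow> bool) \<Rightarrow> 'a step list \<Rightarrow> 'a point \<Rightarrow> 'a point \<Rightarrow> bool" where
  "walk_from_to E ss p q \<longleftrightarrow> is_walk E ss
     \<and> (if ss = [] then p = q else step_start (hd ss) = p \<and> step_end (last ss) = q)"

definition walk_length :: "'a step list \<Rightarrow> real" where
  "walk_length ss = sum_list (map step_len ss)"

definition walk_points :: "'a::linorder step list \<Rightarrow> 'a point set" where
  "walk_points ss = (\<Union>s\<in>set ss. step_cover s)"

definition gdist :: "('a::linorder \<Rightarrow> 'a \<Rightarrow> bool) \<Rightarrow> 'a point \<Rightarrow> 'a point \<Rightarrow> real" where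
  "gdist E p q = Inf {walk_length ss | ss. walk_from_to E ss p q}"

definition is_tour :: "('a::linorder \<Rightarrow> 'a \<Rightarrow> bool) \<Rightarrow> 'a step list \<Rightarrow> bool" where
  "is_tour E ss \<longleftrightarrow> is_walk E ss \<and> (ss \<noteq> [] \<longrightarrow> step_start (hd ss) = step_end (last ss))"

definition delta_tour :: "('a::linorder \<Rightarrow> 'a \<Rightarrow> bool) \<Rightarrow> real \<Rightarrow> 'a step list \<Rightarrow> bool" where
  "delta_tour E \<delta> ss \<longleftrightarrow> is_tour E ss
     \<and> (\<forall>p\<in>Pts E. \<exists>q\<in>walk_points ss. gdist E p q \<le> \<delta>)"

end

theory Submission
  imports Defs
begin

lemma pt_0[simp]: "pt u v 0 = Vert u" by (simp add: pt_def)
lemma pt_1[simp]: "pt u v 1 = Vert v" by (simp add: pt_def)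

lemma pt_swap: "u \<noteq> v \<Longrightarrow> pt u v l = pt v u (1 - l)"
  by (auto simp: pt_def)

lemma pt_Vert:
  assumes "pt u v l = Vert w" "0 \<le> l" "l \<le> 1"
  shows "(l = 0 \<and> w = u) \<or> (l = 1 \<and> w = v)"
  using assms by (auto simp: pt_def split: if_splits)

lemma pt_Mid:
  assumes "pt u v l = Mid a b t"
  shows "0 < l \<and> l < 1 \<and> ((u < v \<and> a = u \<and> b = v \<and> t = l) \<or> (\<not> u < v \<and> a = v \<and> b = u \<and> t = 1 - l))"
  using assms by (auto simp: pt_def split: if_splits)

lemma pt_interior_Mid:
  assumes "0 < l" "l < 1"
  shows "\<exists>a b t. pt u v l = Mid a b t"
  using assms by (auto simp: pt_def)

lemma pt_eq_interior:
  assumes "u \<noteq> v" "u' \<noteq> v'" "0 < l" "l < 1" "0 \<le> l'" "l' \<le> 1" "pt u' v' l' = pt u v l"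
  shows "(u' = u \<and> v' = v \<and> l' = l) \<or> (u' = v \<and> v' = u \<and> l' = 1 - l)"
proof -
  obtain a b t where m: "pt u v l = Mid a b t" using pt_interior_Mid assms by blast
  from pt_Mid[OF m] pt_Mid[of u' v' l' a b t] m assms(7)
  show ?thesis using assms(1,2) by auto
qed

lemma pt_eq_vert:
  assumes "u \<noteq> v" "0 \<le> l" "l \<le> 1" "pt u v l = Vert w"
  shows "(l = 0 \<and> w = u) \<or> (l = 1 \<and> w = v)"
  using pt_Vert assms by blast

lemma pt_is_Vert: "0 \<le> l \<Longrightarrow> l \<le> 1 \<Longrightarrow> (\<exists>w. pt u v l = Vert w) \<longleftrightarrow> l = 0 \<or> l = 1"
  by (auto simp: pt_def)

definition mkpot :: "('a \<Rightarrow> real) \<Rightarrow> ('a \<Rightarrow> 'a \<Rightarrow> real \<Rightarrow> real) \<Rightarrow> 'a point \<Rightarrow> real" where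
  "mkpot \<nu> \<Phi> r = (case r of Vert w \<Rightarrow> \<nu> w | Mid a b l \<Rightarrow> \<Phi> a b l)"

lemma mkpot_pt:
  assumes "u \<noteq> v" "0 \<le> l" "l \<le> 1"
    and "l = 0 \<Longrightarrow> \<Phi> u v 0 = \<nu> u" and "l = 1 \<Longrightarrow> \<Phi> u v 1 = \<nu> v"
    and "\<Phi> v u (1 - l) = \<Phi> u v l"
  shows "mkpot \<nu> \<Phi> (pt u v l) = \<Phi> u v l"
  using assms by (auto simp: pt_def mkpot_def)

lemma walk_Nil[simp]: "walk_from_to E [] p q \<longleftrightarrow> p = q"
  by (simp add: walk_from_to_def is_walk_def)

lemma is_walk_Cons: "is_walk E (s # ss) \<longleftrightarrow> valid_step E s \<and> is_walk E ss \<and> (ss \<noteq> [] \<longrightarrow> step_end s = step_start (hd ss))"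
proof -
  have "(\<forall>i. Suc i < length (s # ss) \<longrightarrow> step_end ((s # ss) ! i) = step_start ((s # ss) ! Suc i))
     \<longleftrightarrow> (ss \<noteq> [] \<longrightarrow> step_end s = step_start (hd ss)) \<and> (\<forall>i. Suc i < length ss \<longrightarrow> step_end (ss ! i) = step_start (ss ! Suc i))"
    (is "?L \<longleftrightarrow> ?R")
  proof
    assume L: ?L
    show ?R
    proof (intro conjI impI allI)
      assume "ss \<noteq> []" then show "step_end s = step_start (hd ss)" using L[rule_format, of 0] by (cases ss) auto
    next
      fix i assume "Suc i < length ss" then show "step_end (ss ! i) = step_start (ss ! Suc i)"
        using L[rule_format, of "Suc i"] by auto
    qed
  next
    assume R: ?R
    show ?L
    proof (intro allI impI)
      fix i assume i: "Suc i < length (s # ss)"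
      show "step_end ((s # ss) ! i) = step_start ((s # ss) ! Suc i)"
      proof (cases i)
        case 0 then show ?thesis using R i by (cases ss) auto
      next
        case (Suc j) then show ?thesis using R i by auto
      qed
    qed
  qed
  then show ?thesis by (auto simp: is_walk_def)
qed

lemma walk_Cons: "walk_from_to E (s # ss) p q \<longleftrightarrow> valid_step E s \<and> step_start s = p \<and> walk_from_to E ss (step_end s) q"
  by (cases ss) (auto simp: walk_from_to_def is_walk_Cons)

lemma walk_append: "walk_from_to E xs p r \<Longrightarrow> walk_from_to E ys r q \<Longrightarrow> walk_from_to E (xs @ ys) p q"
  by (induction xs arbitrary: p) (auto simp: walk_Cons)

lemma walk_length_Nil[simp]: "walk_length [] = 0" by (simp add: walk_length_def)
lemma walk_length_Cons[simp]: "walk_length (s # ss) = step_len s + walk_length ss" by (simp add: walk_length_def)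
lemma walk_length_append[simp]: "walk_length (xs @ ys) = walk_length xs + walk_length ys" by (simp add: walk_length_def)

lemma step_len_nonneg: "0 \<le> step_len s" by (cases s) (auto simp: step_len_def)
lemma walk_length_nonneg: "0 \<le> walk_length ss"
  by (induction ss) (auto intro: add_nonneg_nonneg step_len_nonneg)

definition lip :: "('a::linorder \<Rightarrow> 'a \<Rightarrow> bool) \<Rightarrow> ('a point \<Rightarrow> real) \<Rightarrow> bool" where
  "lip E \<phi> \<longleftrightarrow> (\<forall>u v l m. E u v \<longrightarrow> 0 \<le> l \<longrightarrow> l \<le> 1 \<longrightarrow> 0 \<le> m \<longrightarrow> m \<le> 1 \<longrightarrow> \<bar>\<phi> (pt u v m) - \<phi> (pt u v l)\<bar> \<le> \<bar>l - m\<bar>)"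

lemma lip_walk: "lip E \<phi> \<Longrightarrow> walk_from_to E ss p q \<Longrightarrow> \<bar>\<phi> q - \<phi> p\<bar> \<le> walk_length ss"
proof (induction ss arbitrary: p)
  case Nil then show ?case by simp
next
  case (Cons s ss)
  obtain u v l m where s: "s = (u, v, l, m)" by (cases s)
  from Cons.prems have v: "valid_step E s" and st: "step_start s = p" and w: "walk_from_to E ss (step_end s) q"
    by (auto simp: walk_Cons)
  have 1: "\<bar>\<phi> (step_end s) - \<phi> p\<bar> \<le> step_len s"
    using v st Cons.prems(1) unfolding lip_def s by (auto simp: valid_step_def step_start_def step_end_def step_len_def)
  have 2: "\<bar>\<phi> q - \<phi> (step_end s)\<bar> \<le> walk_length ss" using Cons.IH[OF Cons.prems(1) w] .
  show ?case using 1 2 by simp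
qed

lemma gdist_le: "walk_from_to E ss p q \<Longrightarrow> gdist E p q \<le> walk_length ss"
  unfolding gdist_def
  by (rule cInf_lower) (auto intro: walk_length_nonneg simp: bdd_below_def)

lemma gdist_ge: "lip E \<phi> \<Longrightarrow> walk_from_to E ss0 p q \<Longrightarrow> \<bar>\<phi> q - \<phi> p\<bar> \<le> gdist E p q"
  unfolding gdist_def
  by (rule cInf_greatest) (auto intro: lip_walk)

lemma lip_mkpot:
  fixes \<Phi> :: "'a::linorder \<Rightarrow> 'a \<Rightarrow> real \<Rightarrow> real"
  assumes sg: "\<And>u v. E u v \<Longrightarrow> u \<noteq> v"
    and c0: "\<And>u v. E u v \<Longrightarrow> \<Phi> u v 0 = \<nu> u"
    and c1: "\<And>u v. E u v \<Longrightarrow> \<Phi> u v 1 = \<nu> v"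
    and sy: "\<And>u v l. E u v \<Longrightarrow> \<Phi> v u (1 - l) = \<Phi> u v l"
    and li: "\<And>u v l m. E u v \<Longrightarrow> 0 \<le> l \<Longrightarrow> l \<le> 1 \<Longrightarrow> 0 \<le> m \<Longrightarrow> m \<le> 1 \<Longrightarrow> \<bar>\<Phi> u v m - \<Phi> u v l\<bar> \<le> \<bar>l - m\<bar>"
  shows "lip E (mkpot \<nu> \<Phi>)"
  unfolding lip_def
proof (intro allI impI)
  fix u v and l m :: real assume e: "E u v" and l: "0 \<le> l" "l \<le> 1" and m: "0 \<le> m" "m \<le> 1"
  have "mkpot \<nu> \<Phi> (pt u v l) = \<Phi> u v l" by (rule mkpot_pt) (use sg e l c0 c1 sy in auto)
  moreover have "mkpot \<nu> \<Phi> (pt u v m) = \<Phi> u v m" by (rule mkpot_pt) (use sg e m c0 c1 sy in auto)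
  ultimately show "\<bar>mkpot \<nu> \<Phi> (pt u v m) - mkpot \<nu> \<Phi> (pt u v l)\<bar> \<le> \<bar>l - m\<bar>" using li e l m by simp
qed

lemma sg_E: "simple_graph V E \<Longrightarrow> E u v \<Longrightarrow> u \<in> V \<and> v \<in> V \<and> u \<noteq> v \<and> E v u"
  by (auto simp: simple_graph_def)

lemma walk_vert_vert:
  assumes "(u, u') \<in> {(x, y). E x y}\<^sup>*" "\<And>x y. E x y \<Longrightarrow> x \<noteq> y"
  shows "\<exists>ss. walk_from_to E ss (Vert u) (Vert u')"
  using assms(1)
proof (induction rule: rtrancl_induct)
  case base then show ?case by (rule exI[of _ "[]"]) simp
next
  case (step y z)
  then obtain ss where "walk_from_to E ss (Vert u) (Vert y)" by blast
  moreover have "walk_from_to E [(y, z, 0, 1)] (Vert y) (Vert z)"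
    using step assms(2) by (auto simp: walk_Cons valid_step_def step_start_def step_end_def)
  ultimately show ?case by (blast intro: walk_append)
qed

lemma walk_to_vert:
  assumes "E u v" "0 \<le> l" "l \<le> 1"
  shows "\<exists>ss. walk_from_to E ss (pt u v l) (Vert u) \<and> walk_length ss = l"
proof (cases "l = 0")
  case True then show ?thesis by (intro exI[of _ "[]"]) simp
next
  case False
  then show ?thesis using assms
    by (intro exI[of _ "[(u, v, l, 0)]"]) (auto simp: walk_Cons valid_step_def step_start_def step_end_def step_len_def)
qed

lemma walk_from_vert:
  assumes "E u v" "0 \<le> l" "l \<le> 1"
  shows "\<exists>ss. walk_from_to E ss (Vert u) (pt u v l)"
proof (cases "l = 0")
  case True then show ?thesis by (intro exI[of _ "[]"]) simp
next
  case False
  then show ?thesis using assms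
    by (intro exI[of _ "[(u, v, 0, l)]"]) (auto simp: walk_Cons valid_step_def step_start_def step_end_def)
qed

lemma walk_exists:
  assumes sg: "simple_graph V E" and cg: "connected_graph V E"
    and e: "E u v" "0 \<le> l" "l \<le> 1" and e': "E u' v'" "0 \<le> l'" "l' \<le> 1"
  shows "\<exists>ss. walk_from_to E ss (pt u v l) (pt u' v' l')"
proof -
  obtain s1 where 1: "walk_from_to E s1 (pt u v l) (Vert u)" using walk_to_vert[of E u v l] e by blast
  have "u \<in> V" "u' \<in> V" using sg_E[OF sg e(1)] sg_E[OF sg e'(1)] by auto
  then have "(u, u') \<in> {(x, y). E x y}\<^sup>*" using cg by (auto simp: connected_graph_def)
  then obtain s2 where 2: "walk_from_to E s2 (Vert u) (Vert u')"
    using walk_vert_vert sg_E[OF sg] by blast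
  obtain s3 where 3: "walk_from_to E s3 (Vert u') (pt u' v' l')" using walk_from_vert[of E u' v' l'] e' by blast
  show ?thesis using walk_append[OF walk_append[OF 1 2] 3] by blast
qed

definition cyc :: "('a::linorder \<Rightarrow> 'a \<Rightarrow> bool) \<Rightarrow> 'a step list \<Rightarrow> bool" where
  "cyc E ss \<longleftrightarrow> ss \<noteq> [] \<and> (\<forall>s\<in>set ss. valid_step E s)
     \<and> (\<forall>i<length ss. step_end (ss ! i) = step_start (ss ! (Suc i mod length ss)))"

lemma tour_cyc: "is_tour E ss \<Longrightarrow> ss \<noteq> [] \<Longrightarrow> cyc E ss"
  unfolding cyc_def is_tour_def is_walk_def
proof (intro conjI ballI allI impI; (elim conjE)?)
  fix i assume a: "\<forall>i. Suc i < length ss \<longrightarrow> step_end (ss ! i) = step_start (ss ! Suc i)"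
    "ss \<noteq> [] \<longrightarrow> step_start (hd ss) = step_end (last ss)" "ss \<noteq> []" "i < length ss"
  show "step_end (ss ! i) = step_start (ss ! (Suc i mod length ss))"
  proof (cases "Suc i < length ss")
    case True then show ?thesis using a by simp
  next
    case False
    then have "Suc i = length ss" using a by simp
    then have "i = length ss - 1" by simp
    then show ?thesis using a by (simp add: last_conv_nth hd_conv_nth)
  qed
qed auto

lemma cyc_tour: "cyc E ss \<Longrightarrow> is_tour E ss"
  unfolding cyc_def is_tour_def is_walk_def
proof (intro conjI ballI allI impI; (elim conjE)?)
  fix i assume a: "\<forall>i<length ss. step_end (ss ! i) = step_start (ss ! (Suc i mod length ss))" "Suc i < length ss"
  then show "step_end (ss ! i) = step_start (ss ! Suc i)" by auto
next
  assume a: "\<forall>i<length ss. step_end (ss ! i) = step_start (ss ! (Suc i mod length ss))" "ss \<noteq> []"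
  then have "step_end (ss ! (length ss - 1)) = step_start (ss ! (Suc (length ss - 1) mod length ss))" by simp
  then show "step_start (hd ss) = step_end (last ss)" using a(2) by (simp add: last_conv_nth hd_conv_nth)
qed auto

lemma cyc_rotate: assumes "cyc E ss" shows "cyc E (rotate k ss)"
proof -
  let ?n = "length ss"
  have n: "?n > 0" using assms by (simp add: cyc_def)
  have "step_end (rotate k ss ! i) = step_start (rotate k ss ! (Suc i mod ?n))" if i: "i < ?n" for i
  proof -
    have "rotate k ss ! i = ss ! ((k + i) mod ?n)" using i by (simp add: nth_rotate)
    moreover have "rotate k ss ! (Suc i mod ?n) = ss ! ((k + Suc i mod ?n) mod ?n)" using n by (simp add: nth_rotate)
    moreover have "(k + Suc i mod ?n) mod ?n = Suc ((k + i) mod ?n) mod ?n"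
      by (metis add_Suc_right mod_Suc_eq mod_add_right_eq)
    moreover have "(k + i) mod ?n < ?n" using n by simp
    ultimately show ?thesis using assms unfolding cyc_def by auto
  qed
  then show ?thesis using assms by (auto simp: cyc_def)
qed

lemma walk_points_rotate[simp]: "walk_points (rotate k ss) = walk_points ss"
  by (simp add: walk_points_def)

lemma walk_length_rotate[simp]: "walk_length (rotate k ss) = walk_length ss"
proof -
  have "walk_length (rotate k ss) = walk_length (drop (k mod length ss) ss @ take (k mod length ss) ss)"
    by (simp add: rotate_drop_take)
  also have "\<dots> = walk_length (take (k mod length ss) ss @ drop (k mod length ss) ss)"
    by (simp only: walk_length_append add.commute)
  finally show ?thesis by simp
qed

lemma cyc_walk: "cyc E ss \<Longrightarrow> walk_from_to E ss (step_start (hd ss)) (step_start (hd ss))"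
  using cyc_tour[of E ss] by (auto simp: walk_from_to_def is_tour_def cyc_def)

lemma walk_points_cover: "q \<in> walk_points ss \<longleftrightarrow> (\<exists>i<length ss. q \<in> step_cover (ss ! i))"
proof
  assume "q \<in> walk_points ss"
  then obtain s where "s \<in> set ss" "q \<in> step_cover s" by (auto simp: walk_points_def)
  then show "\<exists>i<length ss. q \<in> step_cover (ss ! i)" by (metis in_set_conv_nth)
next
  assume "\<exists>i<length ss. q \<in> step_cover (ss ! i)"
  then show "q \<in> walk_points ss" by (auto simp: walk_points_def)
qed

lemma cover_pt: "q \<in> step_cover (u, v, l, m) \<longleftrightarrow> (\<exists>t. min l m \<le> t \<and> t \<le> max l m \<and> q = pt u v t)"
  by (auto simp: step_cover_def)

lemma start_in_cover: "step_start s \<in> step_cover s"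
  by (cases s) (auto simp: step_cover_def step_start_def)
lemma end_in_cover: "step_end s \<in> step_cover s"
  by (cases s) (auto simp: step_cover_def step_end_def)

definition pathsteps :: "'a list \<Rightarrow> nat \<Rightarrow> 'a step list" where
  "pathsteps vs j = map (\<lambda>i. (vs ! i, vs ! Suc i, 0, 1)) [j..<length vs - 1]"

lemma pathsteps_walk:
  assumes "\<forall>i. Suc i < length vs \<longrightarrow> E (vs ! i) (vs ! Suc i)" "\<And>x y. E x y \<Longrightarrow> x \<noteq> y" "j < length vs"
  shows "walk_from_to E (pathsteps vs j) (Vert (vs ! j)) (Vert (last vs))
         \<and> walk_length (pathsteps vs j) = real (length vs - 1 - j)"
  using assms(3)
proof (induction "length vs - 1 - j" arbitrary: j)
  case 0
  then have "j = length vs - 1" by simp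
  moreover have "vs \<noteq> []" using 0 by auto
  ultimately show ?case by (auto simp: pathsteps_def last_conv_nth)
next
  case (Suc k)
  then have j: "Suc j < length vs" by simp
  have eq: "pathsteps vs j = (vs ! j, vs ! Suc j, 0, 1) # pathsteps vs (Suc j)"
    using j by (simp add: pathsteps_def upt_conv_Cons)
  have IH: "walk_from_to E (pathsteps vs (Suc j)) (Vert (vs ! Suc j)) (Vert (last vs))
         \<and> walk_length (pathsteps vs (Suc j)) = real (length vs - 1 - Suc j)"
    using Suc j by simp
  have e: "E (vs ! j) (vs ! Suc j)" using assms(1) j by blast
  show ?case unfolding eq using IH e assms(2)[OF e] j
    by (auto simp: walk_Cons valid_step_def step_start_def step_end_def step_len_def of_nat_diff)
qed

definition padsteps :: "'a \<Rightarrow> 'a \<Rightarrow> real \<Rightarrow> nat \<Rightarrow> 'a step list" where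
  "padsteps a b t N = concat (replicate N [(a, b, 1, 1 - t), (a, b, 1 - t, 1)])"

lemma padsteps_walk:
  assumes "E a b" "0 < t" "t \<le> 1"
  shows "walk_from_to E (padsteps a b t N) (Vert b) (Vert b) \<and> walk_length (padsteps a b t N) = 2 * N * t"
proof (induction N)
  case 0 then show ?case by (simp add: padsteps_def)
next
  case (Suc N)
  have eq: "padsteps a b t (Suc N) = [(a, b, 1, 1 - t), (a, b, 1 - t, 1)] @ padsteps a b t N"
    by (simp add: padsteps_def)
  have w: "walk_from_to E [(a, b, 1, 1 - t), (a, b, 1 - t, 1)] (Vert b) (Vert b)"
    using assms by (auto simp: walk_Cons valid_step_def step_start_def step_end_def)
  show ?case unfolding eq using walk_append[OF w] Suc assms
    by (auto simp: step_len_def algebra_simps)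
qed

lemma pad_exists:
  assumes "E a b" "0 \<le> r"
  shows "\<exists>ps. walk_from_to E ps (Vert b) (Vert b) \<and> walk_length ps = r"
proof (cases "r = 0")
  case True then show ?thesis by (intro exI[of _ "[]"]) simp
next
  case False
  define N where "N = nat \<lceil>r\<rceil>"
  have r: "0 < r" using False assms by simp
  have N: "real N \<ge> r" "N \<ge> 1" using r unfolding N_def by linarith+
  define t where "t = r / (2 * N)"
  have t: "0 < t" "t \<le> 1" using r N unfolding t_def by (auto simp: field_simps)
  have "2 * real N * t = r" using N unfolding t_def by (auto simp: field_simps)
  then show ?thesis using padsteps_walk[of E a b t N] assms(1) t by metis
qed

lemma exists_edge:
  assumes "connected_graph V E" "cubic V E"
  shows "\<exists>u v. E u v \<and> u \<in> V"
proof -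
  obtain v0 where v0: "v0 \<in> V" using assms(1) by (auto simp: connected_graph_def)
  then have "card {w. E v0 w} = 3" using assms(2) by (auto simp: cubic_def)
  then have "{w. E v0 w} \<noteq> {}" by (metis card.empty zero_neq_numeral)
  then show ?thesis using v0 by auto
qed

lemma easy_dir:
  assumes sg: "simple_graph V E" and cg: "connected_graph V E" and cu: "cubic V E"
    and tt: "tsp_tour V E vs" and K: "real (tsp_length vs) \<le> K"
  shows "\<exists>ss. delta_tour E (1/2) ss \<and> walk_length ss = K"
proof -
  have ne: "vs \<noteq> []" and hl: "hd vs = last vs" and ed: "\<forall>i. Suc i < length vs \<longrightarrow> E (vs ! i) (vs ! Suc i)"
    and Vs: "V \<subseteq> set vs" using tt by (auto simp: tsp_tour_def)
  have irr: "\<And>x y. E x y \<Longrightarrow> x \<noteq> y" using sg_E[OF sg] by blast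
  obtain u0 v0 where e0: "E u0 v0" "u0 \<in> V" using exists_edge[OF cg cu] by blast
  have "u0 \<in> set vs" "v0 \<in> set vs" "u0 \<noteq> v0" using e0 Vs sg_E[OF sg e0(1)] by auto
  then have len2: "length vs \<ge> 2"
  proof -
    assume a: "u0 \<in> set vs" "v0 \<in> set vs" "u0 \<noteq> v0"
    show ?thesis
    proof (rule ccontr)
      assume "\<not> 2 \<le> length vs"
      then obtain x where "vs = [x]" using ne by (cases vs) (auto simp: Suc_le_eq)
      then show False using a by simp
    qed
  qed
  define L where "L = length vs - 1"
  have L1: "L \<ge> 1" using len2 unfolding L_def by simp
  have pw: "walk_from_to E (pathsteps vs 0) (Vert (vs ! 0)) (Vert (last vs))"
    and pl: "walk_length (pathsteps vs 0) = real L"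
    using pathsteps_walk[OF ed irr, of 0] ne unfolding L_def by auto
  have sL: "Suc (L - 1) = L" "L < length vs" using L1 unfolding L_def by auto
  have eL: "E (vs ! (L - 1)) (last vs)"
    using ed[rule_format, of "L - 1"] sL ne unfolding L_def by (simp add: last_conv_nth)
  have r: "0 \<le> K - real L" using K unfolding tsp_length_def L_def by simp
  obtain ps where psw: "walk_from_to E ps (Vert (last vs)) (Vert (last vs))" and psl: "walk_length ps = K - real L"
    using pad_exists[of E "vs ! (L - 1)" "last vs" "K - real L"] eL r by blast
  define ss where "ss = pathsteps vs 0 @ ps"
  have ssw: "walk_from_to E ss (Vert (last vs)) (Vert (last vs))"
    unfolding ss_def using walk_append[OF pw psw] hl ne by (simp add: hd_conv_nth)
  have ssl: "walk_length ss = K" unfolding ss_def using pl psl by simp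
  have ssne: "ss \<noteq> []" unfolding ss_def pathsteps_def using len2 by simp
  have tour: "is_tour E ss" using ssw ssne by (auto simp: walk_from_to_def is_tour_def)
  have vis: "Vert v \<in> walk_points ss" if "v \<in> set vs" for v
  proof -
    obtain i where i: "i < length vs" "vs ! i = v" using \<open>v \<in> set vs\<close> by (auto simp: in_set_conv_nth)
    define i' where "i' = (if i < L then i else 0)"
    have i': "i' < L \<and> vs ! i' = v"
    proof (cases "i < L")
      case True then show ?thesis using i unfolding i'_def by simp
    next
      case False
      then have "i = L" using i unfolding L_def by simp
      then have "v = last vs" using i ne unfolding L_def by (simp add: last_conv_nth)
      then show ?thesis using False L1 hl ne unfolding i'_def by (simp add: hd_conv_nth)
    qed
    have "pathsteps vs 0 ! i' = (vs ! i', vs ! Suc i', 0, 1)" using i' unfolding pathsteps_def L_def by simp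
    moreover have "pathsteps vs 0 ! i' \<in> set ss" using i' unfolding ss_def pathsteps_def L_def
      by (metis (no_types, lifting) UnI1 diff_zero length_map length_upt nth_mem set_append)
    ultimately show ?thesis using i' start_in_cover[of "pathsteps vs 0 ! i'"]
      by (force simp: walk_points_def step_start_def)
  qed
  have cover: "\<exists>q\<in>walk_points ss. gdist E p q \<le> 1/2" if "p \<in> Pts E" for p
  proof -
    obtain u v l where p: "p = pt u v l" "E u v" "0 \<le> l" "l \<le> 1" using \<open>p \<in> Pts E\<close> by (auto simp: Pts_def)
    have uv: "u \<in> V" "v \<in> V" "u \<noteq> v" "E v u" using sg_E[OF sg p(2)] by auto
    show ?thesis
    proof (cases "l \<le> 1/2")
      case True
      obtain w where "walk_from_to E w (pt u v l) (Vert u)" "walk_length w = l" using walk_to_vert[of E u v l] p by blast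
      then have "gdist E p (Vert u) \<le> 1/2" using gdist_le True p by fastforce
      then show ?thesis using vis uv Vs by blast
    next
      case False
      obtain w where "walk_from_to E w (pt v u (1 - l)) (Vert v)" "walk_length w = 1 - l"
        using walk_to_vert[of E v u "1 - l"] p uv by auto
      moreover have "pt v u (1 - l) = p" using pt_swap[of u v l] uv p by simp
      ultimately have "gdist E p (Vert v) \<le> 1/2" using gdist_le False by fastforce
      then show ?thesis using vis uv Vs by blast
    qed
  qed
  show ?thesis using tour cover ssl unfolding delta_tour_def by blast
qed

definition sgE :: "('a \<Rightarrow> 'a \<Rightarrow> bool) \<Rightarrow> bool" where
  "sgE E \<longleftrightarrow> (\<forall>x y. E x y \<longrightarrow> x \<noteq> y \<and> E y x)"

lemma sgE_sg: "simple_graph V E \<Longrightarrow> sgE E"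
  by (auto simp: simple_graph_def sgE_def)

lemma oriented_facts:
  assumes "s = (a, c, la, m) \<or> s = (c, a, 1 - la, 1 - m)" "a \<noteq> c"
  shows "step_start s = pt a c la \<and> step_end s = pt a c m \<and> step_len s = \<bar>la - m\<bar>
         \<and> step_cover s = {pt a c t | t. min la m \<le> t \<and> t \<le> max la m}"
  using assms(1)
proof
  assume "s = (a, c, la, m)" then show ?thesis by (simp add: step_start_def step_end_def step_len_def step_cover_def)
next
  assume s: "s = (c, a, 1 - la, 1 - m)"
  have sw: "\<And>t. pt c a t = pt a c (1 - t)" using pt_swap[of c a] assms(2) by auto
  have "step_cover s = {pt c a t | t. min (1 - la) (1 - m) \<le> t \<and> t \<le> max (1 - la) (1 - m)}"
    by (simp add: s step_cover_def)
  also have "\<dots> = {pt a c t | t. min la m \<le> t \<and> t \<le> max la m}"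
  proof (intro set_eqI iffI)
    fix q assume "q \<in> {pt c a t | t. min (1 - la) (1 - m) \<le> t \<and> t \<le> max (1 - la) (1 - m)}"
    then obtain t where "min (1 - la) (1 - m) \<le> t" "t \<le> max (1 - la) (1 - m)" "q = pt c a t" by blast
    then show "q \<in> {pt a c t | t. min la m \<le> t \<and> t \<le> max la m}"
      by (intro CollectI exI[of _ "1 - t"]) (auto simp: sw)
  next
    fix q assume "q \<in> {pt a c t | t. min la m \<le> t \<and> t \<le> max la m}"
    then obtain t where "min la m \<le> t" "t \<le> max la m" "q = pt a c t" by blast
    then show "q \<in> {pt c a t | t. min (1 - la) (1 - m) \<le> t \<and> t \<le> max (1 - la) (1 - m)}"
      by (intro CollectI exI[of _ "1 - t"]) (auto simp: sw)
  qed
  finally show ?thesis using sw by (simp add: s step_start_def step_end_def step_len_def)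
qed

lemma orient:
  assumes sg: "sgE E" and v: "valid_step E s" and st: "step_start s = pt a b la"
    and ab: "E a b" and l: "0 \<le> la" "la < 1"
  shows "\<exists>c m. E a c \<and> (0 < la \<longrightarrow> c = b) \<and> 0 \<le> m \<and> m \<le> 1 \<and> la \<noteq> m
           \<and> (s = (a, c, la, m) \<or> s = (c, a, 1 - la, 1 - m))"
proof -
  obtain u v l m where s: "s = (u, v, l, m)" by (cases s)
  have uv: "E u v" "0 \<le> l" "l \<le> 1" "0 \<le> m" "m \<le> 1" "l \<noteq> m" using v by (auto simp: s valid_step_def)
  have uv2: "u \<noteq> v" "E v u" using sg uv(1) by (auto simp: sgE_def)
  have ab2: "a \<noteq> b" using sg ab by (auto simp: sgE_def)
  have eq: "pt u v l = pt a b la" using st by (simp add: s step_start_def)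
  show ?thesis
  proof (cases "la = 0")
    case True
    then have "pt u v l = Vert a" using eq by simp
    from pt_Vert[OF this uv(2,3)] show ?thesis
    proof
      assume "l = 0 \<and> a = u" then show ?thesis using True uv by (intro exI[of _ v] exI[of _ m]) (auto simp: s)
    next
      assume "l = 1 \<and> a = v" then show ?thesis using True uv uv2 by (intro exI[of _ u] exI[of _ "1 - m"]) (auto simp: s)
    qed
  next
    case False
    then have l0: "0 < la" using l by simp
    from pt_eq_interior[OF ab2 uv2(1) l0 l(2) uv(2,3) eq] show ?thesis
    proof
      assume "u = a \<and> v = b \<and> l = la" then show ?thesis using uv by (intro exI[of _ b] exI[of _ m]) (auto simp: s)
    next
      assume "u = b \<and> v = a \<and> l = 1 - la" then show ?thesis using uv ab by (intro exI[of _ b] exI[of _ "1 - m"]) (auto simp: s)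
    qed
  qed
qed

lemma abs_max0: "\<bar>max 0 (a::real) - max 0 b\<bar> \<le> \<bar>a - b\<bar>" by (auto simp: max_def)

lemma near_edge:
  assumes sg: "simple_graph V E" and cg: "connected_graph V E" and xz: "E x z"
    and uv: "E u v" "0 \<le> t" "t \<le> 1" and gd: "gdist E (pt x z (1/2)) (pt u v t) \<le> 1/2"
  shows "\<exists>t'. 0 \<le> t' \<and> t' \<le> 1 \<and> pt u v t = pt x z t'"
proof -
  have sE: "sgE E" using sgE_sg[OF sg] .
  have xz2: "x \<noteq> z" "E z x" using sE xz by (auto simp: sgE_def)
  define \<nu> where "\<nu> w = (if w = x \<or> w = z then 1/2 else (0::real))" for w
  define \<Phi> where "\<Phi> a b l = (if (a = x \<and> b = z) \<or> (a = z \<and> b = x) then 1 - \<bar>l - 1/2\<bar>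
      else if a = x \<or> a = z then max 0 (1/2 - l) else if b = x \<or> b = z then max 0 (l - 1/2) else (0::real))" for a b l
  have irr: "\<And>a b. E a b \<Longrightarrow> a \<noteq> b" using sE by (auto simp: sgE_def)
  have lp: "lip E (mkpot \<nu> \<Phi>)"
  proof (rule lip_mkpot)
    show "\<And>u v. E u v \<Longrightarrow> u \<noteq> v" by (rule irr)
    show "\<And>u v. E u v \<Longrightarrow> \<Phi> u v 0 = \<nu> u" using xz2 irr unfolding \<Phi>_def \<nu>_def by auto
    show "\<And>u v. E u v \<Longrightarrow> \<Phi> u v 1 = \<nu> v" using xz2 irr unfolding \<Phi>_def \<nu>_def by auto
    show "\<And>u v l. E u v \<Longrightarrow> \<Phi> v u (1 - l) = \<Phi> u v l" using xz2 irr unfolding \<Phi>_def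
      by (auto simp: abs_minus_commute max_def)
    show "\<And>u v l m. E u v \<Longrightarrow> 0 \<le> l \<Longrightarrow> l \<le> 1 \<Longrightarrow> 0 \<le> m \<Longrightarrow> m \<le> 1 \<Longrightarrow> \<bar>\<Phi> u v m - \<Phi> u v l\<bar> \<le> \<bar>l - m\<bar>"
      unfolding \<Phi>_def using abs_max0 by (auto simp: abs_if max_def)
  qed
  obtain w where w: "walk_from_to E w (pt x z (1/2)) (pt u v t)" using walk_exists[OF sg cg, of x z "1/2" u v t] xz uv by auto
  have "\<bar>mkpot \<nu> \<Phi> (pt u v t) - mkpot \<nu> \<Phi> (pt x z (1/2))\<bar> \<le> 1/2" using gdist_ge[OF lp w] gd by simp
  moreover have "mkpot \<nu> \<Phi> (pt x z (1/2)) = 1"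
    by (subst mkpot_pt) (use xz2 in \<open>auto simp: \<Phi>_def\<close>)
  moreover have "mkpot \<nu> \<Phi> (pt u v t) = \<Phi> u v t"
    by (rule mkpot_pt) (use irr uv xz2 in \<open>auto simp: \<Phi>_def \<nu>_def abs_minus_commute max_def\<close>)
  ultimately have "\<bar>\<Phi> u v t - 1\<bar> \<le> 1/2" by simp
  then have big: "\<Phi> u v t \<ge> 1/2" using abs_ge_minus_self[of "\<Phi> u v t - 1"] by linarith
  show ?thesis
  proof (cases "(u = x \<and> v = z) \<or> (u = z \<and> v = x)")
    case True then show ?thesis
    proof
      assume "u = x \<and> v = z" then show ?thesis using uv by auto
    next
      assume "u = z \<and> v = x" then show ?thesis using uv pt_swap[of z x t] xz2 by (intro exI[of _ "1 - t"]) auto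
    qed
  next
    case False
    show ?thesis
    proof (cases "u = x \<or> u = z")
      case True
      then have "t = 0" using big False uv unfolding \<Phi>_def by (auto simp: max_def split: if_splits)
      then show ?thesis using True by (auto intro: exI[of _ 0] exI[of _ 1])
    next
      case F2: False
      show ?thesis
      proof (cases "v = x \<or> v = z")
        case True
        then have "t = 1" using big False F2 uv unfolding \<Phi>_def by (auto simp: max_def split: if_splits)
        then show ?thesis using True by (auto intro: exI[of _ 0] exI[of _ 1])
      next
        case False
        then show ?thesis using big F2 \<open>\<not> ((u = x \<and> v = z) \<or> (u = z \<and> v = x))\<close> unfolding \<Phi>_def by auto
      qed
    qed
  qed
qed

lemma pt_in_Pts: "E u v \<Longrightarrow> 0 \<le> l \<Longrightarrow> l \<le> 1 \<Longrightarrow> pt u v l \<in> Pts E"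
  unfolding Pts_def by blast

lemma cover_sub: "s \<in> set ss \<Longrightarrow> step_cover s \<subseteq> walk_points ss"
  by (auto simp: walk_points_def)

lemma cover_pt_valid:
  assumes "valid_step E (u, v, l, m)" "q \<in> step_cover (u, v, l, m)"
  shows "\<exists>\<tau>. min l m \<le> \<tau> \<and> \<tau> \<le> max l m \<and> 0 \<le> \<tau> \<and> \<tau> \<le> 1 \<and> q = pt u v \<tau> \<and> E u v"
  using assms by (auto simp: valid_step_def step_cover_def)

lemma wp_pt:
  assumes "cyc E ss" "q \<in> walk_points ss"
  shows "\<exists>u v \<tau>. E u v \<and> 0 \<le> \<tau> \<and> \<tau> \<le> 1 \<and> q = pt u v \<tau>"
proof -
  obtain s where s: "s \<in> set ss" "q \<in> step_cover s" using assms(2) by (auto simp: walk_points_def)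
  obtain u v l m where sd: "s = (u, v, l, m)" by (cases s)
  have "valid_step E s" using assms(1) s by (auto simp: cyc_def)
  then show ?thesis using cover_pt_valid[of E u v l m q] s sd by blast
qed

lemma interior_chain:
  assumes sE: "sgE E" and cy: "cyc E ss" and xz: "E x z"
    and nx: "Vert x \<notin> walk_points ss" and nz: "Vert z \<notin> walk_points ss"
    and i: "i < length ss" and st: "step_start (ss ! i) = pt x z t0" "0 < t0" "t0 < 1"
  shows "\<forall>q \<in> walk_points ss. \<exists>t. 0 < t \<and> t < 1 \<and> q = pt x z t"
proof -
  let ?n = "length ss"
  have xz2: "x \<noteq> z" using sE xz by (auto simp: sgE_def)
  define P where "P k \<longleftrightarrow> (\<exists>t. 0 < t \<and> t < 1 \<and> step_start (ss ! k) = pt x z t)" for k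
  have stp: "(\<forall>q \<in> step_cover (ss ! k). \<exists>t. 0 < t \<and> t < 1 \<and> q = pt x z t) \<and> P (Suc k mod ?n)"
    if k: "k < ?n" "P k" for k
  proof -
    obtain t where t: "0 < t" "t < 1" "step_start (ss ! k) = pt x z t" using k(2) by (auto simp: P_def)
    have vs: "valid_step E (ss ! k)" using cy k(1) by (auto simp: cyc_def)
    obtain c m where cm: "E x c" "0 < t \<longrightarrow> c = z" "0 \<le> m" "m \<le> 1"
       "ss ! k = (x, c, t, m) \<or> ss ! k = (c, x, 1 - t, 1 - m)"
      using orient[OF sE vs t(3) xz] t by auto
    have c: "c = z" using cm t by simp
    have of: "step_end (ss ! k) = pt x z m" "step_cover (ss ! k) = {pt x z \<tau> | \<tau>. min t m \<le> \<tau> \<and> \<tau> \<le> max t m}"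
      using oriented_facts[of "ss ! k" x z t m] cm(5) c xz2 by auto
    have inwp: "step_cover (ss ! k) \<subseteq> walk_points ss" using k(1) cover_sub nth_mem by blast
    have cov: "\<forall>q \<in> step_cover (ss ! k). \<exists>t. 0 < t \<and> t < 1 \<and> q = pt x z t"
    proof
      fix q assume q: "q \<in> step_cover (ss ! k)"
      then obtain \<tau> where \<tau>: "min t m \<le> \<tau>" "\<tau> \<le> max t m" "q = pt x z \<tau>" using of by auto
      have r: "0 \<le> \<tau>" "\<tau> \<le> 1" using \<tau> t cm by (auto simp: min_def max_def split: if_splits)
      have "\<tau> \<noteq> 0" using q inwp nx \<tau>(3) by auto
      moreover have "\<tau> \<noteq> 1" using q inwp nz \<tau>(3) by auto
      ultimately show "\<exists>t. 0 < t \<and> t < 1 \<and> q = pt x z t" using r \<tau>(3) by (intro exI[of _ \<tau>]) auto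
    qed
    moreover have "P (Suc k mod ?n)"
    proof -
      have "step_end (ss ! k) \<in> step_cover (ss ! k)" by (rule end_in_cover)
      then obtain t' where "0 < t'" "t' < 1" "step_end (ss ! k) = pt x z t'" using cov by blast
      moreover have "step_end (ss ! k) = step_start (ss ! (Suc k mod ?n))" using cy k(1) by (auto simp: cyc_def)
      ultimately show ?thesis unfolding P_def by metis
    qed
    ultimately show ?thesis by blast
  qed
  have n: "?n > 0" using i by linarith
  have all: "P ((i + d) mod ?n)" for d
  proof (induction d)
    case 0 then show ?case using i st by (auto simp: P_def)
  next
    case (Suc d)
    have "P (Suc ((i + d) mod ?n) mod ?n)" using stp[of "(i + d) mod ?n"] Suc n by auto
    moreover have "Suc ((i + d) mod ?n) mod ?n = (i + Suc d) mod ?n" by (simp add: mod_Suc_eq)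
    ultimately show ?case by simp
  qed
  show ?thesis
  proof
    fix q assume "q \<in> walk_points ss"
    then obtain k where k: "k < ?n" "q \<in> step_cover (ss ! k)" by (auto simp: walk_points_cover)
    have "(i + (k + ?n - i)) mod ?n = k" using k i by simp
    then have "P k" using all[of "k + ?n - i"] by simp
    then show "\<exists>t. 0 < t \<and> t < 1 \<and> q = pt x z t" using stp[OF k(1)] k(2) by blast
  qed
qed

lemma other_neighbor:
  assumes "cubic V E" "x \<in> V"
  shows "\<exists>z'. E x z' \<and> z' \<noteq> z"
proof (rule ccontr)
  assume "\<not> ?thesis"
  then have "{w. E x w} \<subseteq> {z}" by auto
  then have "card {w. E x w} \<le> card {z}" by (intro card_mono) auto
  then have "card {w. E x w} \<le> 1" by simp
  moreover have "card {w. E x w} = 3" using assms by (auto simp: cubic_def)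
  ultimately show False by simp
qed

lemma vcover:
  assumes sg: "simple_graph V E" and cg: "connected_graph V E" and cu: "cubic V E"
    and dt: "delta_tour E (1/2) ss" and xz: "E x z"
  shows "Vert x \<in> walk_points ss \<or> Vert z \<in> walk_points ss"
proof (rule ccontr)
  assume "\<not> ?thesis"
  then have nx: "Vert x \<notin> walk_points ss" and nz: "Vert z \<notin> walk_points ss" by auto
  have sE: "sgE E" using sgE_sg[OF sg] .
  have xz2: "x \<noteq> z" "x \<in> V" using sg_E[OF sg xz] by auto
  have cov: "\<And>p. p \<in> Pts E \<Longrightarrow> \<exists>q\<in>walk_points ss. gdist E p q \<le> 1/2" using dt by (auto simp: delta_tour_def)
  have "pt x z (1/2) \<in> Pts E" using xz by (auto intro: pt_in_Pts)
  then obtain q where q: "q \<in> walk_points ss" "gdist E (pt x z (1/2)) q \<le> 1/2" using cov by blast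
  then have ssne: "ss \<noteq> []" by (auto simp: walk_points_def)
  have cy: "cyc E ss" using dt ssne tour_cyc by (auto simp: delta_tour_def)
  obtain k where k: "k < length ss" "q \<in> step_cover (ss ! k)" using q by (auto simp: walk_points_cover)
  obtain u v l m where sd: "ss ! k = (u, v, l, m)" by (cases "ss ! k")
  have vs: "valid_step E (ss ! k)" using cy k by (auto simp: cyc_def)
  obtain \<tau> where \<tau>: "0 \<le> \<tau>" "\<tau> \<le> 1" "q = pt u v \<tau>" "E u v" using cover_pt_valid[of E u v l m q] vs sd k by auto
  obtain t' where t': "0 \<le> t'" "t' \<le> 1" "q = pt x z t'" using near_edge[OF sg cg xz \<tau>(4) \<tau>(1,2)] q \<tau>(3) by auto
  have "t' \<noteq> 0" "t' \<noteq> 1" using t' nx nz q by auto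
  then have t'i: "0 < t'" "t' < 1" using t' by auto
  have uv2: "u \<noteq> v" using sE \<tau>(4) by (auto simp: sgE_def)
  have ori: "(u = x \<and> v = z \<and> \<tau> = t') \<or> (u = z \<and> v = x \<and> \<tau> = 1 - t')"
    using pt_eq_interior[OF xz2(1) uv2 t'i \<tau>(1,2)] \<tau>(3) t'(3) by simp
  have lr: "0 \<le> l" "l \<le> 1" using vs sd by (auto simp: valid_step_def)
  obtain l' where l': "0 \<le> l'" "l' \<le> 1" "step_start (ss ! k) = pt x z l'"
  proof -
    have "step_start (ss ! k) = pt u v l" by (simp add: sd step_start_def)
    from ori show ?thesis
    proof
      assume "u = x \<and> v = z \<and> \<tau> = t'" then show ?thesis using that lr \<open>step_start (ss ! k) = pt u v l\<close> by auto
    next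
      assume "u = z \<and> v = x \<and> \<tau> = 1 - t'"
      then have "step_start (ss ! k) = pt x z (1 - l)" using \<open>step_start (ss ! k) = pt u v l\<close> pt_swap[of z x l] xz2 by auto
      then show ?thesis using lr by (intro that[of "1 - l"]) auto
    qed
  qed
  have "step_start (ss ! k) \<in> walk_points ss" using start_in_cover k cover_sub nth_mem by blast
  then have "l' \<noteq> 0" "l' \<noteq> 1" using l' nx nz by auto
  then have all: "\<forall>q \<in> walk_points ss. \<exists>t. 0 < t \<and> t < 1 \<and> q = pt x z t"
    using interior_chain[OF sE cy xz nx nz k(1) l'(3)] l' by auto
  obtain z' where z': "E x z'" "z' \<noteq> z" using other_neighbor[OF cu xz2(2)] by blast
  have "pt x z' (1/2) \<in> Pts E" using z' by (auto intro: pt_in_Pts)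
  then obtain q' where q': "q' \<in> walk_points ss" "gdist E (pt x z' (1/2)) q' \<le> 1/2" using cov by blast
  obtain u' v' \<tau>' where u': "E u' v'" "0 \<le> \<tau>'" "\<tau>' \<le> 1" "q' = pt u' v' \<tau>'" using wp_pt[OF cy q'(1)] by blast
  obtain t'' where t'': "0 \<le> t''" "t'' \<le> 1" "q' = pt x z' t''" using near_edge[OF sg cg z'(1) u'(1-3)] q'(2) u'(4) by auto
  obtain t3 where t3: "0 < t3" "t3 < 1" "q' = pt x z t3" using all q'(1) by blast
  have "x \<noteq> z'" using sE z'(1) by (auto simp: sgE_def)
  from pt_eq_interior[OF xz2(1) this t3(1,2) t''(1,2)] t3(3) t''(3) z'(2) xz2(1) show False by auto
qed

lemma cyc_variation:
  fixes g :: "'a::linorder point \<Rightarrow> real" and \<omega> :: "'a step \<Rightarrow> real"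
  assumes cy: "cyc E ss"
    and w: "\<And>k. k < length ss \<Longrightarrow> \<bar>g (step_end (ss ! k)) - g (step_start (ss ! k))\<bar> \<le> \<omega> (ss ! k)"
    and j: "j < length ss" and k: "k < length ss"
  shows "2 * \<bar>g (step_start (ss ! k)) - g (step_start (ss ! j))\<bar> \<le> (\<Sum>i<length ss. \<omega> (ss ! i))"
proof -
  let ?n = "length ss"
  define r where "r i = step_start (ss ! (i mod ?n))" for i
  have n: "?n > 0" using j by linarith
  have en: "step_end (ss ! i) = r (Suc i)" if "i < ?n" for i
    using cy that unfolding cyc_def r_def by auto
  have tel: "\<bar>g (r b) - g (r a)\<bar> \<le> (\<Sum>i\<in>{a..<b}. \<omega> (ss ! i))" if "a \<le> b" "b \<le> ?n" for a b
    using that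
  proof (induction b)
    case 0 then show ?case by simp
  next
    case (Suc b)
    show ?case
    proof (cases "a = Suc b")
      case True then show ?thesis by simp
    next
      case False
      then have ab: "a \<le> b" using Suc by simp
      have IH: "\<bar>g (r b) - g (r a)\<bar> \<le> (\<Sum>i\<in>{a..<b}. \<omega> (ss ! i))" using Suc ab by simp
      have st: "\<bar>g (r (Suc b)) - g (r b)\<bar> \<le> \<omega> (ss ! b)"
        using w[of b] en[of b] Suc(3) unfolding r_def by simp
      have "(\<Sum>i\<in>{a..<Suc b}. \<omega> (ss ! i)) = (\<Sum>i\<in>{a..<b}. \<omega> (ss ! i)) + \<omega> (ss ! b)"
        using ab by simp
      then show ?thesis using IH st by linarith
    qed
  qed
  have key: "2 * \<bar>g (r k') - g (r j')\<bar> \<le> (\<Sum>i<?n. \<omega> (ss ! i))" if jk: "j' \<le> k'" "k' < ?n" for j' k'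
  proof -
    have "(\<Sum>i<?n. \<omega> (ss ! i)) = (\<Sum>i\<in>{0..<j'}. \<omega> (ss ! i)) + (\<Sum>i\<in>{j'..<k'}. \<omega> (ss ! i)) + (\<Sum>i\<in>{k'..<?n}. \<omega> (ss ! i))"
      using jk by (simp add: sum.atLeastLessThan_concat lessThan_atLeast0)
    moreover have "\<bar>g (r j') - g (r 0)\<bar> \<le> (\<Sum>i\<in>{0..<j'}. \<omega> (ss ! i))" using tel jk by simp
    moreover have "\<bar>g (r k') - g (r j')\<bar> \<le> (\<Sum>i\<in>{j'..<k'}. \<omega> (ss ! i))" using tel jk by simp
    moreover have "\<bar>g (r ?n) - g (r k')\<bar> \<le> (\<Sum>i\<in>{k'..<?n}. \<omega> (ss ! i))" using tel jk by simp
    moreover have "r ?n = r 0" unfolding r_def by simp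
    ultimately have a: "(\<Sum>i<?n. \<omega> (ss ! i)) \<ge> \<bar>g (r j') - g (r 0)\<bar> + \<bar>g (r k') - g (r j')\<bar> + \<bar>g (r 0) - g (r k')\<bar>"
      by simp
    have "\<bar>g (r k') - g (r j')\<bar> \<le> \<bar>g (r j') - g (r 0)\<bar> + \<bar>g (r 0) - g (r k')\<bar>" by arith
    then show ?thesis using a by (smt (verit))
  qed
  have rk: "r k = step_start (ss ! k)" "r j = step_start (ss ! j)" using j k unfolding r_def by auto
  show ?thesis
  proof (cases "j \<le> k")
    case True then show ?thesis using key[OF True k] rk by simp
  next
    case False then show ?thesis using key[of k j] j rk by (simp add: abs_minus_commute)
  qed
qed

definition gx :: "'a \<Rightarrow> 'a \<Rightarrow> 'a point \<Rightarrow> real" where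
  "gx x y = mkpot (\<lambda>w. if w = y then 1 else 0) (\<lambda>a b l. if a = x \<and> b = y then l else if a = y \<and> b = x then 1 - l else 0)"

definition ofs :: "'a \<Rightarrow> 'a \<Rightarrow> 'a \<Rightarrow> 'a \<Rightarrow> real \<Rightarrow> real" where
  "ofs x y u v t = (if u = x \<and> v = y then t else if u = y \<and> v = x then 1 - t else 0)"

lemma gx_pt:
  assumes "u \<noteq> v" "0 \<le> t" "t \<le> 1" "pt u v t \<noteq> Vert y"
  shows "gx x y (pt u v t) = ofs x y u v t"
proof -
  consider "t = 0" | "t = 1" | "0 < t" "t < 1" "u < v" | "0 < t" "t < 1" "\<not> u < v" using assms by linarith
  then show ?thesis
  proof cases
    case 1
    then have p: "pt u v t = Vert u" by simp
    then have "u \<noteq> y" using assms(4) by auto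
    then show ?thesis unfolding p using 1 by (simp add: gx_def mkpot_def ofs_def)
  next
    case 2
    then have p: "pt u v t = Vert v" by simp
    then have "v \<noteq> y" using assms(4) by auto
    then show ?thesis unfolding p using 2 by (simp add: gx_def mkpot_def ofs_def)
  next
    case 3
    then have p: "pt u v t = Mid u v t" by (simp add: pt_def)
    have "gx x y (Mid u v t) = (if u = x \<and> v = y then t else if u = y \<and> v = x then 1 - t else 0)"
      unfolding gx_def mkpot_def by simp
    then show ?thesis unfolding p ofs_def .
  next
    case 4
    then have p: "pt u v t = Mid v u (1 - t)" by (simp add: pt_def)
    have "gx x y (Mid v u (1 - t)) = (if v = x \<and> u = y then 1 - t else if v = y \<and> u = x then 1 - (1 - t) else 0)"
      unfolding gx_def mkpot_def by simp
    then have g: "gx x y (pt u v t) = (if v = x \<and> u = y then 1 - t else if v = y \<and> u = x then 1 - (1 - t) else 0)"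
      unfolding p .
    consider (a) "u = x \<and> v = y" | (b) "u = y \<and> v = x" "\<not> (u = x \<and> v = y)"
      | (c) "\<not> (u = x \<and> v = y)" "\<not> (u = y \<and> v = x)" by blast
    then show ?thesis
    proof cases
      case a
      then have "\<not> (v = x \<and> u = y)" using assms(1) by blast
      then show ?thesis unfolding g ofs_def using a by (simp only: if_True if_False) simp
    next
      case b
      then show ?thesis unfolding g ofs_def by (simp only: if_True if_False) simp
    next
      case c
      then have "\<not> (v = y \<and> u = x)" "\<not> (v = x \<and> u = y)" by blast+
      then show ?thesis unfolding g ofs_def using c by (simp only: if_True if_False) 
    qed
  qed
qed


definition omega :: "'a \<Rightarrow> 'a \<Rightarrow> 'a step \<Rightarrow> real" where
  "omega x y s = (case s of (u, v, l, m) \<Rightarrow> if (u = x \<and> v = y) \<or> (u = y \<and> v = x) then \<bar>l - m\<bar> else 0)"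

definition omy :: "'a \<Rightarrow> 'a step \<Rightarrow> real" where
  "omy y s = (case s of (u, v, l, m) \<Rightarrow> if u = y \<or> v = y then \<bar>l - m\<bar> else 0)"

lemma ofs_omega:
  assumes "u \<noteq> v"
  shows "\<bar>ofs x y u v m - ofs x y u v l\<bar> \<le> omega x y (u, v, l, m)"
proof (cases "u = x \<and> v = y")
  case True
  then show ?thesis using assms unfolding ofs_def omega_def by (simp add: abs_minus_commute)
next
  case F: False
  show ?thesis
  proof (cases "u = y \<and> v = x")
    case True
    then show ?thesis using F unfolding ofs_def omega_def by (simp only: if_not_P[OF F] if_P[OF True] prod.case simp_thms; simp)
  next
    case False
    have n: "\<not> ((u = x \<and> v = y) \<or> (u = y \<and> v = x))" using F False by blast
    show ?thesis unfolding ofs_def omega_def by (simp only: if_not_P[OF F] if_not_P[OF False] if_not_P[OF n] prod.case; simp)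
  qed
qed


lemma omega_step:
  assumes sE: "sgE E" and vs: "valid_step E s"
    and ny: "step_start s \<noteq> Vert y" "step_end s \<noteq> Vert y"
  shows "\<bar>gx x y (step_end s) - gx x y (step_start s)\<bar> \<le> omega x y s"
proof -
  obtain u v l m where s: "s = (u, v, l, m)" by (cases s)
  have uv: "E u v" "0 \<le> l" "l \<le> 1" "0 \<le> m" "m \<le> 1" "u \<noteq> v" using vs sE by (auto simp: s valid_step_def sgE_def)
  have "gx x y (step_start s) = ofs x y u v l" using gx_pt[of u v l y x] uv ny by (simp add: s step_start_def)
  moreover have "gx x y (step_end s) = ofs x y u v m" using gx_pt[of u v m y x] uv ny by (simp add: s step_end_def)
  ultimately show ?thesis using ofs_omega[OF uv(6), of x y m l] by (simp add: s)
qed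

lemma vert_is_start:
  assumes cy: "cyc E ss" and w: "Vert w \<in> walk_points ss"
  shows "\<exists>k<length ss. step_start (ss ! k) = Vert w"
proof -
  obtain k where k: "k < length ss" "Vert w \<in> step_cover (ss ! k)" using w by (auto simp: walk_points_cover)
  obtain u v l m where s: "ss ! k = (u, v, l, m)" by (cases "ss ! k")
  have vs: "valid_step E (ss ! k)" using cy k by (auto simp: cyc_def)
  obtain \<tau> where t: "min l m \<le> \<tau>" "\<tau> \<le> max l m" "0 \<le> \<tau>" "\<tau> \<le> 1" "Vert w = pt u v \<tau>"
    using cover_pt_valid[of E u v l m "Vert w"] vs k s by auto
  have lm: "0 \<le> l" "l \<le> 1" "0 \<le> m" "m \<le> 1" using vs s by (auto simp: valid_step_def)
  have "\<tau> = 0 \<or> \<tau> = 1" using pt_is_Vert[of \<tau> u v] t by metis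
  then have "\<tau> = l \<or> \<tau> = m" using t lm by (auto simp: min_def max_def split: if_splits)
  then show ?thesis
  proof
    assume "\<tau> = l" then show ?thesis using k t s by (auto simp: step_start_def)
  next
    assume "\<tau> = m"
    then have "step_end (ss ! k) = Vert w" using t s by (simp add: step_end_def)
    then have "step_start (ss ! (Suc k mod length ss)) = Vert w" using cy k by (auto simp: cyc_def)
    moreover have "Suc k mod length ss < length ss" using k(1) by (intro mod_less_divisor) linarith
    ultimately show ?thesis by blast
  qed
qed

lemma ofs_cases: "ofs x y u v = (\<lambda>t. t) \<or> ofs x y u v = (\<lambda>t. 1 - t) \<or> ofs x y u v = (\<lambda>t. 0)"
proof (cases "u = x \<and> v = y")
  case True show ?thesis unfolding ofs_def by (simp only: if_P[OF True]; simp)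
next
  case F: False
  show ?thesis
  proof (cases "u = y \<and> v = x")
    case True show ?thesis unfolding ofs_def by (simp only: if_P[OF True] if_not_P[OF F]; simp)
  next
    case False show ?thesis unfolding ofs_def by (simp only: if_not_P[OF False] if_not_P[OF F]; simp)
  qed
qed

lemma ofs_between:
  assumes "min l m \<le> t" "t \<le> max l m"
  shows "ofs x y u v t \<le> max (ofs x y u v l) (ofs x y u v m)"
  using ofs_cases[of x y u v] assms by (auto simp: min_def max_def split: if_splits)

lemma omy_ge:
  assumes "x1 \<noteq> x2"
  shows "omega x1 y s + omega x2 y s \<le> omy y s"
proof -
  obtain u v l m where s: "s = (u, v, l, m)" by (cases s)
  have o1: "omega x1 y s = (if (u = x1 \<and> v = y) \<or> (u = y \<and> v = x1) then \<bar>l - m\<bar> else 0)" by (simp add: omega_def s)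
  have o2: "omega x2 y s = (if (u = x2 \<and> v = y) \<or> (u = y \<and> v = x2) then \<bar>l - m\<bar> else 0)" by (simp add: omega_def s)
  have oy: "omy y s = (if u = y \<or> v = y then \<bar>l - m\<bar> else 0)" by (simp add: omy_def s)
  show ?thesis
  proof (cases "(u = x1 \<and> v = y) \<or> (u = y \<and> v = x1)")
    case True
    then have n2: "\<not> ((u = x2 \<and> v = y) \<or> (u = y \<and> v = x2))" using assms by blast
    have y: "u = y \<or> v = y" using True by blast
    show ?thesis unfolding o1 o2 oy by (simp only: if_P[OF True] if_not_P[OF n2] if_P[OF y]; simp)
  next
    case F: False
    show ?thesis
    proof (cases "(u = x2 \<and> v = y) \<or> (u = y \<and> v = x2)")
      case True
      have y: "u = y \<or> v = y" using True by blast
      show ?thesis unfolding o1 o2 oy by (simp only: if_P[OF True] if_not_P[OF F] if_P[OF y]; simp)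
    next
      case False
      show ?thesis unfolding o1 o2 oy by (simp only: if_not_P[OF False] if_not_P[OF F]; simp)
    qed
  qed
qed

lemma lip_tent: "\<bar>max 0 (c - \<bar>m - a\<bar>) - max 0 (c - \<bar>l - a\<bar>)\<bar> \<le> \<bar>l - (m::real)\<bar>"
proof -
  have "\<bar>max 0 (c - \<bar>m - a\<bar>) - max 0 (c - \<bar>l - a\<bar>)\<bar> \<le> \<bar>(c - \<bar>m - a\<bar>) - (c - \<bar>l - a\<bar>)\<bar>" by (rule abs_max0)
  also have "\<dots> \<le> \<bar>l - m\<bar>" by arith
  finally show ?thesis .
qed

lemma lip_ramp: "\<bar>max 0 (m - c) - max 0 (l - c)\<bar> \<le> \<bar>l - (m::real)\<bar>"
  using abs_max0[of "m - c" "l - c"] by arith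

lemma gx_vert: "w \<noteq> y \<Longrightarrow> gx x y (Vert w) = 0"
  by (simp add: gx_def mkpot_def)

lemma wp_pt_noty:
  assumes cy: "cyc E ss" and sE: "sgE E" and q: "q \<in> walk_points ss"
  shows "\<exists>a b t. E a b \<and> 0 \<le> t \<and> t \<le> 1 \<and> q = pt a b t \<and> a \<noteq> y"
proof -
  obtain u v \<tau> where u: "E u v" "0 \<le> \<tau>" "\<tau> \<le> 1" "q = pt u v \<tau>" using wp_pt[OF cy q] by blast
  have uv: "u \<noteq> v" "E v u" using sE u(1) by (auto simp: sgE_def)
  show ?thesis
  proof (cases "u = y")
    case False then show ?thesis using u by blast
  next
    case True
    then have "v \<noteq> y" using uv by simp
    moreover have "q = pt v u (1 - \<tau>)" using u(4) pt_swap[OF uv(1)] by simp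
    ultimately show ?thesis using uv(2) u(2,3) by (intro exI[of _ v] exI[of _ u] exI[of _ "1 - \<tau>"]) auto
  qed
qed

lemma gx_le_d:
  assumes cy: "cyc E ss" and sE: "sgE E" and ny: "Vert y \<notin> walk_points ss"
    and d: "\<And>r. r \<in> step_start ` set ss \<Longrightarrow> gx x y r \<le> D"
    and q: "q \<in> walk_points ss"
  shows "gx x y q \<le> D"
proof -
  obtain k where k: "k < length ss" "q \<in> step_cover (ss ! k)" using q by (auto simp: walk_points_cover)
  obtain u v l m where s: "ss ! k = (u, v, l, m)" by (cases "ss ! k")
  have vs: "valid_step E (ss ! k)" using cy k by (auto simp: cyc_def)
  have uv: "u \<noteq> v" "0 \<le> l" "l \<le> 1" "0 \<le> m" "m \<le> 1" using vs sE by (auto simp: s valid_step_def sgE_def)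
  obtain \<tau> where t: "min l m \<le> \<tau>" "\<tau> \<le> max l m" "0 \<le> \<tau>" "\<tau> \<le> 1" "q = pt u v \<tau>"
    using cover_pt_valid[of E u v l m q] vs k s by auto
  have inw: "step_cover (ss ! k) \<subseteq> walk_points ss" using k(1) cover_sub nth_mem by blast
  have sw: "step_start (ss ! k) \<in> walk_points ss" "step_end (ss ! k) \<in> walk_points ss"
    using inw start_in_cover end_in_cover by blast+
  have "q \<noteq> Vert y" using q ny by auto
  then have "gx x y q = ofs x y u v \<tau>" using gx_pt[of u v \<tau> y x] uv t by simp
  moreover have "gx x y (step_start (ss ! k)) = ofs x y u v l"
  proof -
    have "pt u v l \<noteq> Vert y" using sw ny by (metis s step_start_def prod.case)
    then show ?thesis using gx_pt[of u v l y x] uv by (simp add: s step_start_def)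
  qed
  moreover have "gx x y (step_end (ss ! k)) = ofs x y u v m"
  proof -
    have "pt u v m \<noteq> Vert y" using sw ny by (metis s step_end_def prod.case)
    then show ?thesis using gx_pt[of u v m y x] uv by (simp add: s step_end_def)
  qed
  moreover have "step_start (ss ! k) \<in> step_start ` set ss" using k(1) by simp
  moreover have "step_end (ss ! k) \<in> step_start ` set ss"
  proof -
    have "step_end (ss ! k) = step_start (ss ! (Suc k mod length ss))" using cy k(1) by (auto simp: cyc_def)
    moreover have "Suc k mod length ss < length ss" using k(1) by (intro mod_less_divisor) linarith
    ultimately show ?thesis by (metis image_eqI nth_mem)
  qed
  ultimately have e: "gx x y q \<le> max (gx x y (step_start (ss ! k))) (gx x y (step_end (ss ! k)))"
    and i1: "step_start (ss ! k) \<in> step_start ` set ss" and i2: "step_end (ss ! k) \<in> step_start ` set ss"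
    using ofs_between[OF t(1,2), of x y u v] by auto
  show ?thesis using e d[OF i1] d[OF i2] by linarith
qed

lemma cover_pair:
  assumes sg: "simple_graph V E" and cg: "connected_graph V E" and dt: "delta_tour E (1/2) ss"
    and cy: "cyc E ss" and ny: "Vert y \<notin> walk_points ss"
    and x1: "E y x1" and x2: "E y x2" "x2 \<noteq> x1"
    and d: "\<And>x q. E y x \<Longrightarrow> q \<in> walk_points ss \<Longrightarrow> gx x y q \<le> D x"
    and dmax: "\<And>x. E y x \<Longrightarrow> D x \<le> D x1" and d0: "0 \<le> D x2"
  shows "1 \<le> D x1 + D x2"
proof (rule ccontr)
  assume "\<not> ?thesis"
  then have lt: "D x1 + D x2 < 1" by simp
  have sE: "sgE E" using sgE_sg[OF sg] .
  have irr: "\<And>a b. E a b \<Longrightarrow> a \<noteq> b" and sym: "\<And>a b. E a b \<Longrightarrow> E b a" using sE by (auto simp: sgE_def)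
  have d21: "D x2 \<le> D x1" using dmax x2 by simp
  define s0 where "s0 = (D x1 - D x2) / 2"
  have s0: "0 \<le> s0" "s0 < 1/2" using d21 lt d0 unfolding s0_def by auto
  define f where "f a t = (if a = x2 then max 0 (1 - s0 - \<bar>t - (1 - s0)\<bar>) else max 0 (t - 2 * s0))" for a t
  define \<Phi> where "\<Phi> a b l = (if b = y then f a l else if a = y then f b (1 - l) else 0)" for a b l
  define \<nu> where "\<nu> w = (if w = y then 1 - 2 * s0 else 0)" for w
  have f0: "f a 0 = 0" for a using s0 unfolding f_def by auto
  have f1: "f a 1 = 1 - 2 * s0" for a using s0 unfolding f_def by auto
  have flip: "\<bar>f a m - f a l\<bar> \<le> \<bar>l - m\<bar>" for a l m
    unfolding f_def using lip_tent[of "1 - s0" m "1 - s0" l] lip_ramp[of m "2 * s0" l] by auto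
  have c0: "\<Phi> u v 0 = \<nu> u" if "E u v" for u v
  proof -
    have "u \<noteq> v" using irr that by blast
    then show ?thesis unfolding \<Phi>_def \<nu>_def using f0 f1 by auto
  qed
  have c1: "\<Phi> u v 1 = \<nu> v" if "E u v" for u v
  proof -
    have "u \<noteq> v" using irr that by blast
    then show ?thesis unfolding \<Phi>_def \<nu>_def using f0 f1 by auto
  qed
  have sy: "\<Phi> v u (1 - l) = \<Phi> u v l" if "E u v" for u v l
  proof -
    have "u \<noteq> v" using irr that by blast
    then show ?thesis unfolding \<Phi>_def by auto
  qed
  have li: "\<bar>\<Phi> u v m - \<Phi> u v l\<bar> \<le> \<bar>l - m\<bar>" if "E u v" for u v l m
  proof -
    have "\<bar>f v (1 - m) - f v (1 - l)\<bar> \<le> \<bar>l - m\<bar>" using flip[of v "1 - l" "1 - m"] by simp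
    then show ?thesis unfolding \<Phi>_def using flip by auto
  qed
  have lp: "lip E (mkpot \<nu> \<Phi>)" by (rule lip_mkpot) (use irr c0 c1 sy li in auto)
  have mp: "mkpot \<nu> \<Phi> (pt u v t) = \<Phi> u v t" if "E u v" "0 \<le> t" "t \<le> 1" for u v t
    by (rule mkpot_pt) (use that irr c0 c1 sy in auto)
  define p where "p = pt x2 y (1 - s0)"
  have ex2: "E x2 y" "x2 \<noteq> y" using sym[OF x2(1)] irr x2(1) by auto
  have pP: "p \<in> Pts E" unfolding p_def using ex2 s0 by (intro pt_in_Pts) auto
  have psi_p: "mkpot \<nu> \<Phi> p = 1 - s0"
    unfolding p_def using mp[of x2 y "1 - s0"] ex2 s0 by (simp add: \<Phi>_def f_def)
  define B where "B = max (D x2) (max 0 (D x1 - 2 * s0))"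
  have psi_q: "mkpot \<nu> \<Phi> q \<le> B" if q: "q \<in> walk_points ss" for q
  proof -
    obtain a b t where abt: "E a b" "0 \<le> t" "t \<le> 1" "q = pt a b t" "a \<noteq> y" using wp_pt_noty[OF cy sE q] by blast
    have pq: "mkpot \<nu> \<Phi> q = \<Phi> a b t" using mp abt by simp
    show ?thesis
    proof (cases "b = y")
      case False
      then have "\<Phi> a b t = 0" unfolding \<Phi>_def using abt(5) by simp
      then show ?thesis using pq d0 unfolding B_def by simp
    next
      case True
      have ab: "a \<noteq> b" using irr abt(1) by blast
      have qy: "q \<noteq> Vert y" using q ny by auto
      have "gx a y q = ofs a y a b t" using gx_pt[of a b t y a] ab abt qy by simp
      then have "gx a y q = t" using True by (simp add: ofs_def)
      moreover have ea: "E y a" using sym abt(1) True by simp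
      ultimately have ta: "t \<le> D a" using d[OF ea q] by simp
      have Da: "D a \<le> D x1" using dmax ea by simp
      have "\<Phi> a b t = f a t" unfolding \<Phi>_def using True by simp
      moreover have "f a t \<le> B"
      proof (cases "a = x2")
        case True
        have "max 0 (1 - s0 - \<bar>t - (1 - s0)\<bar>) \<le> max 0 t" by (auto simp: max_def abs_if)
        then show ?thesis unfolding f_def B_def using True ta abt(2) by auto
      next
        case False
        have "max 0 (t - 2 * s0) \<le> max 0 (D x1 - 2 * s0)" using ta Da by (auto simp: max_def)
        then show ?thesis unfolding f_def B_def using False by auto
      qed
      ultimately show ?thesis using pq by simp
    qed
  qed
  obtain q where q: "q \<in> walk_points ss" "gdist E p q \<le> 1/2" using dt pP by (auto simp: delta_tour_def)
  obtain a b t where abt: "E a b" "0 \<le> t" "t \<le> 1" "q = pt a b t" using wp_pt[OF cy q(1)] by blast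
  obtain w where w: "walk_from_to E w p q"
    using walk_exists[OF sg cg, of x2 y "1 - s0" a b t] ex2 s0 abt unfolding p_def by auto
  have "\<bar>mkpot \<nu> \<Phi> q - mkpot \<nu> \<Phi> p\<bar> \<le> 1/2" using gdist_ge[OF lp w] q(2) by linarith
  then have "1 - s0 - B \<le> 1/2" using psi_p psi_q[OF q(1)] by linarith
  moreover have "1 - s0 - B > 1/2"
  proof -
    have "D x1 - 2 * s0 = D x2" unfolding s0_def by (simp add: field_simps)
    then have "B = D x2" unfolding B_def using d0 by simp
    then show ?thesis using lt unfolding s0_def by (simp add: field_simps)
  qed
  ultimately show False by linarith
qed

lemma per_y:
  assumes sg: "simple_graph V E" and cg: "connected_graph V E" and cu: "cubic V E"
    and dt: "delta_tour E (1/2) ss" and cy: "cyc E ss"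
    and yV: "y \<in> V" and ny: "Vert y \<notin> walk_points ss"
  shows "2 \<le> (\<Sum>i<length ss. omy y (ss ! i))"
proof -
  have sE: "sgE E" using sgE_sg[OF sg] .
  have irr: "\<And>a b. E a b \<Longrightarrow> a \<noteq> b" and sym: "\<And>a b. E a b \<Longrightarrow> E b a" using sE by (auto simp: sgE_def)
  let ?n = "length ss"
  define S where "S = step_start ` set ss"
  have Sf: "finite S" unfolding S_def by simp
  define D where "D x = Max (gx x y ` S)" for x
  have dS: "gx x y r \<le> D x" if "r \<in> S" for x r unfolding D_def using Sf that by (intro Max_ge) auto
  have props: "0 \<le> D x \<and> 2 * D x \<le> (\<Sum>i<?n. omega x y (ss ! i)) \<and> (\<forall>q\<in>walk_points ss. gx x y q \<le> D x)"
    if ex: "E y x" for x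
  proof -
    have xy: "x \<noteq> y" "E x y" using irr sym ex by auto
    have "Vert x \<in> walk_points ss \<or> Vert y \<in> walk_points ss" by (rule vcover[OF sg cg cu dt xy(2)])
    then have xW: "Vert x \<in> walk_points ss" using ny by blast
    obtain k0 where k0: "k0 < ?n" "step_start (ss ! k0) = Vert x" using vert_is_start[OF cy xW] by blast
    have g0: "gx x y (step_start (ss ! k0)) = 0" using k0 xy gx_vert by simp
    have k0S: "step_start (ss ! k0) \<in> S" unfolding S_def using k0(1) by (intro imageI nth_mem)
    have D0: "0 \<le> D x" using dS[OF k0S, of x] g0 by simp
    have "S \<noteq> {}" using k0S by blast
    then have "D x \<in> gx x y ` S" unfolding D_def using Sf by (intro Max_in) auto
    then obtain r where r0: "D x = gx x y r" "r \<in> S" by (rule imageE)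
    then have r: "r \<in> S" "gx x y r = D x" by auto
    from r(1) obtain s where s': "r = step_start s" "s \<in> set ss" unfolding S_def by (rule imageE)
    then have s: "s \<in> set ss" "r = step_start s" by auto
    then obtain k where k0': "k < ?n" "ss ! k = s" by (metis in_set_conv_nth)
    then have k: "k < ?n" "step_start (ss ! k) = r" using s by auto
    have stp: "\<bar>gx x y (step_end (ss ! i)) - gx x y (step_start (ss ! i))\<bar> \<le> omega x y (ss ! i)" if i: "i < ?n" for i
    proof (rule omega_step[OF sE])
      show "valid_step E (ss ! i)" using cy i by (auto simp: cyc_def)
      have c: "step_cover (ss ! i) \<subseteq> walk_points ss" by (rule cover_sub[OF nth_mem[OF i]])
      show "step_start (ss ! i) \<noteq> Vert y" using c ny start_in_cover[of "ss ! i"] by auto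
      show "step_end (ss ! i) \<noteq> Vert y" using c ny end_in_cover[of "ss ! i"] by auto
    qed
    have "2 * \<bar>gx x y (step_start (ss ! k)) - gx x y (step_start (ss ! k0))\<bar> \<le> (\<Sum>i<?n. omega x y (ss ! i))"
      by (rule cyc_variation[OF cy stp k0(1) k(1)])
    then have L: "2 * D x \<le> (\<Sum>i<?n. omega x y (ss ! i))" using k r g0 D0 by simp
    have "\<forall>q\<in>walk_points ss. gx x y q \<le> D x"
    proof
      fix q assume q: "q \<in> walk_points ss"
      have "\<And>r. r \<in> step_start ` set ss \<Longrightarrow> gx x y r \<le> D x" using dS unfolding S_def by blast
      then show "gx x y q \<le> D x" using gx_le_d[OF cy sE ny _ q] by blast
    qed
    then show ?thesis using D0 L by blast
  qed
  define N where "N = {x. E y x}"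
  have NV: "N \<subseteq> V" unfolding N_def using sg_E[OF sg] by blast
  have Nf: "finite N" using NV sg by (auto simp: simple_graph_def intro: finite_subset)
  have N3: "card N = 3" using cu yV unfolding N_def cubic_def by blast
  then have Nne: "N \<noteq> {}" by auto
  have "Max (D ` N) \<in> D ` N" using Nf Nne by (intro Max_in) auto
  then obtain x1 where x1': "Max (D ` N) = D x1" "x1 \<in> N" by (rule imageE)
  then have x1: "x1 \<in> N" "D x1 = Max (D ` N)" by auto
  have dmax: "D x \<le> D x1" if "E y x" for x using x1 Nf that unfolding N_def by (auto intro: Max_ge)
  obtain x2 where x2: "x2 \<in> N" "x2 \<noteq> x1"
  proof -
    have "\<not> N \<subseteq> {x1}"
    proof
      assume "N \<subseteq> {x1}"
      then have "card N \<le> card {x1}" by (intro card_mono) auto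
      then show False using N3 by simp
    qed
    then show ?thesis using that by blast
  qed
  have p1: "0 \<le> D x1 \<and> 2 * D x1 \<le> (\<Sum>i<?n. omega x1 y (ss ! i)) \<and> (\<forall>q\<in>walk_points ss. gx x1 y q \<le> D x1)"
    using props x1 unfolding N_def by blast
  have p2: "0 \<le> D x2 \<and> 2 * D x2 \<le> (\<Sum>i<?n. omega x2 y (ss ! i)) \<and> (\<forall>q\<in>walk_points ss. gx x2 y q \<le> D x2)"
    using props x2 unfolding N_def by blast
  have one: "1 \<le> D x1 + D x2"
  proof (rule cover_pair[OF sg cg dt cy ny])
    show "E y x1" "E y x2" "x2 \<noteq> x1" using x1 x2 unfolding N_def by auto
    show "\<And>x q. E y x \<Longrightarrow> q \<in> walk_points ss \<Longrightarrow> gx x y q \<le> D x" using props by blast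
    show "\<And>x. E y x \<Longrightarrow> D x \<le> D x1" by (rule dmax)
    show "0 \<le> D x2" using p2 by blast
  qed
  have "(\<Sum>i<?n. omega x1 y (ss ! i)) + (\<Sum>i<?n. omega x2 y (ss ! i)) \<le> (\<Sum>i<?n. omy y (ss ! i))"
  proof -
    have "x1 \<noteq> x2" using x2(2) by simp
    then have "\<And>i. omega x1 y (ss ! i) + omega x2 y (ss ! i) \<le> omy y (ss ! i)" by (rule omy_ge)
    then show ?thesis unfolding sum.distrib[symmetric] by (intro sum_mono)
  qed
  then show ?thesis using p1 p2 one by linarith
qed

definition wt :: "'a set \<Rightarrow> 'a step \<Rightarrow> real" where
  "wt W s = (case s of (u, v, l, m) \<Rightarrow> if u \<in> W \<and> v \<in> W then \<bar>l - m\<bar> else 0)"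

definition ends :: "'a::linorder step list \<Rightarrow> 'a set" where
  "ends ss = {v. \<exists>s\<in>set ss. step_end s = Vert v}"

lemma ends_Cons: "ends (s # ss) = {v. step_end s = Vert v} \<union> ends ss"
  by (auto simp: ends_def)

lemma wt_nonneg: "0 \<le> wt W s" by (cases s) (auto simp: wt_def)
lemma wt_sum_nonneg: "0 \<le> sum_list (map (wt W) ss)" by (induction ss) (auto intro: add_nonneg_nonneg wt_nonneg)

lemma wt_orient:
  assumes "s = (a, c, la, m) \<or> s = (c, a, 1 - la, 1 - m)"
  shows "wt W s = (if a \<in> W \<and> c \<in> W then \<bar>la - m\<bar> else 0)"
  using assms by (auto simp: wt_def)

lemma disc:
  assumes sE: "sgE E" and wk: "walk_from_to E ss (pt a b la) (Vert z)"
    and ab: "E a b" and la: "0 \<le> la" "la < 1" and aW: "a \<in> W"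
    and eW: "ends ss \<subseteq> W"
  shows "\<exists>vs. vs \<noteq> [] \<and> hd vs = a \<and> last vs = z \<and> successively E vs \<and> set vs = insert a (ends ss)
     \<and> real (length vs - 1) \<le> sum_list (map (wt W) ss) + (if b \<in> W then la else 0)"
  using wk ab la aW eW
proof (induction ss arbitrary: a b la)
  case Nil
  then have "pt a b la = Vert z" by simp
  then have "la = 0 \<and> z = a" using pt_Vert[of a b la z] Nil by auto
  then show ?case by (intro exI[of _ "[a]"]) (auto simp: ends_def)
next
  case (Cons s rest)
  from Cons.prems(1) have vs: "valid_step E s" and st: "step_start s = pt a b la"
    and wr: "walk_from_to E rest (step_end s) (Vert z)" by (auto simp: walk_Cons)
  have irr: "\<And>x y. E x y \<Longrightarrow> x \<noteq> y" and sym: "\<And>x y. E x y \<Longrightarrow> E y x" using sE by (auto simp: sgE_def)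
  obtain c m where cm: "E a c" "0 < la \<longrightarrow> c = b" "0 \<le> m" "m \<le> 1" "la \<noteq> m"
    "s = (a, c, la, m) \<or> s = (c, a, 1 - la, 1 - m)"
    using orient[OF sE vs st Cons.prems(2) Cons.prems(3,4)] by blast
  have ac: "a \<noteq> c" using irr cm(1) by blast
  have en: "step_end s = pt a c m" using oriented_facts[OF cm(6) ac] by blast
  have w: "wt W s = (if a \<in> W \<and> c \<in> W then \<bar>la - m\<bar> else 0)" using wt_orient[OF cm(6)] .
  have eW': "ends rest \<subseteq> W" using Cons.prems(6) by (auto simp: ends_def)
  have effnn: "0 \<le> (if b \<in> W then la else 0)" using la Cons.prems(3) by simp
  consider "m = 0" | "m = 1" | "0 < m" "m < 1" using cm by linarith
  then show ?case
  proof cases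
    case 1
    then have e: "step_end s = Vert a" using en by simp
    have "walk_from_to E rest (pt a b 0) (Vert z)" using wr e by simp
    from Cons.IH[OF this Cons.prems(2) _ _ Cons.prems(5) eW'] obtain vs where
      v: "vs \<noteq> []" "hd vs = a" "last vs = z" "successively E vs" "set vs = insert a (ends rest)"
      "real (length vs - 1) \<le> sum_list (map (wt W) rest) + (if b \<in> W then 0 else 0)" by auto
    have "set vs = insert a (ends (s # rest))" using v(5) e by (auto simp: ends_Cons)
    moreover have "real (length vs - 1) \<le> sum_list (map (wt W) (s # rest)) + (if b \<in> W then la else 0)"
      using v(6) wt_nonneg[of W s] effnn by simp
    ultimately have h1: "set vs = insert a (ends (s # rest))"
      and h2: "real (length vs - 1) \<le> sum_list (map (wt W) (s # rest)) + (if b \<in> W then la else 0)" by blast+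
    show ?thesis by (rule exI[of _ vs]) (intro conjI h1 h2 v(1-4))
  next
    case 2
    then have e: "step_end s = Vert c" using en by simp
    have cW: "c \<in> W" using Cons.prems(6) e by (auto simp: ends_def)
    have "walk_from_to E rest (pt c a 0) (Vert z)" using wr e by simp
    from Cons.IH[OF this sym[OF cm(1)] _ _ cW eW'] obtain vs where
      v: "vs \<noteq> []" "hd vs = c" "last vs = z" "successively E vs" "set vs = insert c (ends rest)"
      "real (length vs - 1) \<le> sum_list (map (wt W) rest) + (if a \<in> W then 0 else 0)" by auto
    have f1: "set (a # vs) = insert a (ends (s # rest))" using v(5) e by (auto simp: ends_Cons)
    have f2: "successively E (a # vs)" using v cm(1) by (simp add: successively_Cons)
    have eff1: "wt W s + (if b \<in> W then la else 0) = 1"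
    proof (cases "0 < la")
      case True
      then have "c = b" using cm by simp
      then show ?thesis using w 2 Cons.prems(5) cW True Cons.prems(4) by simp
    next
      case False
      then have "la = 0" using Cons.prems(3) by simp
      then show ?thesis using w 2 Cons.prems(5) cW by simp
    qed
    have bd: "real (length (a # vs) - 1) \<le> sum_list (map (wt W) (s # rest)) + (if b \<in> W then la else 0)"
    proof -
      have len1: "length vs \<ge> 1" using v(1) by (cases vs) auto
      then have "real (length (a # vs) - 1) = real (length vs - 1) + 1" by (simp add: of_nat_diff)
      moreover have "sum_list (map (wt W) (s # rest)) = wt W s + sum_list (map (wt W) rest)" by simp
      moreover have "(if a \<in> W then 0 else 0) = (0::real)" by simp
      ultimately show ?thesis using v(6) eff1 by linarith
    qed
    have f3: "a # vs \<noteq> []" "hd (a # vs) = a" "last (a # vs) = z" using v(1,3) by auto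
    show ?thesis
      by (rule exI[of _ "a # vs"]) (intro conjI f1 f2 f3 bd)
  next
    case 3
    have "walk_from_to E rest (pt a c m) (Vert z)" using wr en by simp
    from Cons.IH[OF this cm(1) _ 3(2) Cons.prems(5) eW'] 3 obtain vs where
      v: "vs \<noteq> []" "hd vs = a" "last vs = z" "successively E vs" "set vs = insert a (ends rest)"
      "real (length vs - 1) \<le> sum_list (map (wt W) rest) + (if c \<in> W then m else 0)" by auto
    have ne: "\<forall>v. step_end s \<noteq> Vert v" using en 3 pt_is_Vert[of m a c] by auto
    have "set vs = insert a (ends (s # rest))" using v(5) ne by (auto simp: ends_Cons)
    moreover have "(if c \<in> W then m else 0) \<le> wt W s + (if b \<in> W then la else 0)"
    proof (cases "c \<in> W")
      case True
      show ?thesis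
      proof (cases "0 < la")
        case T2: True
        then have "c = b" using cm by simp
        then show ?thesis using w True Cons.prems(5) T2 by simp
      next
        case False
        then have "la = 0" using Cons.prems(3) by simp
        then show ?thesis using w True Cons.prems(5) 3 effnn by simp
      qed
    next
      case False
      then show ?thesis using wt_nonneg[of W s] effnn by simp
    qed
    ultimately have g1: "set vs = insert a (ends (s # rest))"
      and g2: "real (length vs - 1) \<le> sum_list (map (wt W) (s # rest)) + (if b \<in> W then la else 0)"
      using v(6) by auto
    show ?thesis by (rule exI[of _ vs]) (intro conjI g1 g2 v(1-4))
  qed
qed

lemma insert_detour:
  assumes "successively E vs" "vs \<noteq> []" "hd vs = last vs" "x \<in> set vs" "E x y" "E y x"
  shows "\<exists>vs'. successively E vs' \<and> vs' \<noteq> [] \<and> hd vs' = last vs' \<and> set vs' = insert y (set vs)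
     \<and> length vs' = length vs + 2"
proof -
  obtain xs zs where sp: "vs = xs @ x # zs" using split_list[OF assms(4)] by blast
  define vs' where "vs' = xs @ x # y # x # zs"
  have "successively E (xs @ [x])" "successively E (x # zs)" "xs = [] \<or> E (last xs) x"
    using assms(1) unfolding sp successively_append_iff[of E xs "x # zs"]
    by (auto simp: successively_append_iff successively_Cons)
  then have "successively E vs'" unfolding vs'_def using assms(5,6)
    by (auto simp: successively_append_iff successively_Cons)
  moreover have "hd vs' = hd vs" unfolding vs'_def sp by (cases xs) auto
  moreover have "last vs' = last vs" unfolding vs'_def sp by (cases zs) auto
  moreover have "set vs' = insert y (set vs)" unfolding vs'_def sp by auto
  moreover have "length vs' = length vs + 2" unfolding vs'_def sp by simp
  moreover have "vs' \<noteq> []" unfolding vs'_def by simp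
  ultimately show ?thesis using assms(3) by metis
qed

lemma add_detours:
  assumes "finite Y" "successively E vs" "vs \<noteq> []" "hd vs = last vs"
    and nb: "\<And>y. y \<in> Y \<Longrightarrow> \<exists>x\<in>set vs. E x y \<and> E y x"
  shows "\<exists>vs'. successively E vs' \<and> vs' \<noteq> [] \<and> hd vs' = last vs' \<and> set vs' = set vs \<union> Y
     \<and> length vs' = length vs + 2 * card Y"
  using assms(1) nb
proof (induction Y rule: finite_induct)
  case empty then show ?case using assms by (intro exI[of _ vs]) auto
next
  case (insert y F)
  obtain vs1 where v1: "successively E vs1" "vs1 \<noteq> []" "hd vs1 = last vs1" "set vs1 = set vs \<union> F"
    "length vs1 = length vs + 2 * card F" using insert by blast
  obtain x where x: "x \<in> set vs" "E x y" "E y x" using insert.prems by blast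
  obtain vs2 where v2: "successively E vs2" "vs2 \<noteq> []" "hd vs2 = last vs2" "set vs2 = insert y (set vs1)"
    "length vs2 = length vs1 + 2" using insert_detour[OF v1(1-3) _ x(2,3)] x(1) v1(4) by blast
  show ?case using v1 v2 insert.hyps by (intro exI[of _ vs2]) auto
qed

lemma sum_list_rotate_map: "sum_list (map (f :: 'b \<Rightarrow> real) (rotate k xs)) = sum_list (map f xs)"
proof -
  have "sum_list (map f (rotate k xs)) = sum_list (map f (drop (k mod length xs) xs @ take (k mod length xs) xs))"
    by (simp add: rotate_drop_take)
  also have "\<dots> = sum_list (map f (take (k mod length xs) xs @ drop (k mod length xs) xs))"
    by (simp only: map_append sum_list_append add.commute)
  also have "\<dots> = sum_list (map f xs)" by (simp only: append_take_drop_id)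
  finally show ?thesis .
qed

lemma sum_list_sum_swap: "sum_list (map (\<lambda>s. \<Sum>y\<in>Y. f y s) ss) = (\<Sum>y\<in>Y. sum_list (map (f y) ss))"
  by (induction ss) (auto simp: sum.distrib)

lemma sum_idx: "(\<Sum>i<length ss. f (ss ! i)) = sum_list (map f ss)"
proof -
  have "sum_list (map f ss) = (\<Sum>i = 0..<length (map f ss). map f ss ! i)" by (rule sum_list_sum_nth)
  also have "\<dots> = (\<Sum>i<length ss. f (ss ! i))" by (simp add: atLeast0LessThan)
  finally show ?thesis by simp
qed

lemma omy_simp: "omy y (u, v, l, m) = (if y = u \<or> y = v then \<bar>l - m\<bar> else 0)"
  by (auto simp: omy_def)

lemma len_split:
  assumes fin: "finite Y" and uv: "u \<in> V" "v \<in> V" and Y: "Y = V - W" and cov: "u \<in> W \<or> v \<in> W"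
  shows "wt W (u, v, l, m) + (\<Sum>y\<in>Y. omy y (u, v, l, m)) \<le> step_len (u, v, l, m)"
proof -
  have len: "step_len (u, v, l, m) = \<bar>l - m\<bar>" by (simp add: step_len_def)
  consider "u \<in> W" "v \<in> W" | "u \<in> W" "v \<notin> W" | "u \<notin> W" "v \<in> W" using cov by blast
  then show ?thesis
  proof cases
    case 1
    have "(\<Sum>y\<in>Y. omy y (u, v, l, m)) = (\<Sum>y\<in>Y. 0)"
      by (rule sum.cong) (use 1 Y in \<open>auto simp: omy_simp\<close>)
    then show ?thesis using 1 by (simp add: wt_def len)
  next
    case 2
    have "(\<Sum>y\<in>Y. omy y (u, v, l, m)) = (\<Sum>y\<in>Y. if y = v then \<bar>l - m\<bar> else 0)"
      by (rule sum.cong) (use 2 Y in \<open>auto simp: omy_simp\<close>)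
    also have "\<dots> = \<bar>l - m\<bar>" using fin 2 uv Y by simp
    finally show ?thesis using 2 by (simp add: wt_def len)
  next
    case 3
    have "(\<Sum>y\<in>Y. omy y (u, v, l, m)) = (\<Sum>y\<in>Y. if y = u then \<bar>l - m\<bar> else 0)"
      by (rule sum.cong) (use 3 Y in \<open>auto simp: omy_simp\<close>)
    also have "\<dots> = \<bar>l - m\<bar>" using fin 3 uv Y by simp
    finally show ?thesis using 3 by (simp add: wt_def len)
  qed
qed

lemma hard_dir:
  assumes sg: "simple_graph V E" and cg: "connected_graph V E" and cu: "cubic V E"
    and dt: "delta_tour E (1/2) ss" and K: "walk_length ss = K"
  shows "\<exists>vs. tsp_tour V E vs \<and> real (tsp_length vs) \<le> K"
proof -
  have sE: "sgE E" using sgE_sg[OF sg] .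
  have irr: "\<And>a b. E a b \<Longrightarrow> a \<noteq> b" and sym: "\<And>a b. E a b \<Longrightarrow> E b a" using sE by (auto simp: sgE_def)
  have finV: "finite V" using sg by (simp add: simple_graph_def)
  obtain u0 v0 where e0: "E u0 v0" "u0 \<in> V" using exists_edge[OF cg cu] by blast
  have "pt u0 v0 (1/2) \<in> Pts E" using e0 by (intro pt_in_Pts) auto
  then obtain q0 where "q0 \<in> walk_points ss" using dt by (auto simp: delta_tour_def)
  then have ssne: "ss \<noteq> []" by (auto simp: walk_points_def)
  have cy: "cyc E ss" using dt ssne tour_cyc by (auto simp: delta_tour_def)
  define W where "W = {v. Vert v \<in> walk_points ss}"
  obtain a b where ab: "E a b" "a \<in> W"
  proof (cases "u0 \<in> W")
    case True then show ?thesis using that e0 by blast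
  next
    case False
    then have "v0 \<in> W" using vcover[OF sg cg cu dt e0(1)] unfolding W_def by blast
    then show ?thesis using that sym[OF e0(1)] by blast
  qed
  have aW': "Vert a \<in> walk_points ss" using ab W_def by simp
  obtain k where k: "k < length ss" "step_start (ss ! k) = Vert a" using vert_is_start[OF cy aW'] by blast
  define ss' where "ss' = rotate k ss"
  have cy': "cyc E ss'" unfolding ss'_def by (rule cyc_rotate[OF cy])
  have ss'ne: "ss' \<noteq> []" using cy' by (simp add: cyc_def)
  have hd': "step_start (hd ss') = Vert a" unfolding ss'_def using ssne k by (simp add: hd_rotate_conv_nth)
  have wp': "walk_points ss' = walk_points ss" unfolding ss'_def by simp
  have wk: "walk_from_to E ss' (pt a b 0) (Vert a)" using cyc_walk[OF cy'] hd' by simp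
  have eW: "ends ss' \<subseteq> W"
  proof
    fix v assume "v \<in> ends ss'"
    then obtain s where s: "s \<in> set ss'" "step_end s = Vert v" by (auto simp: ends_def)
    have "step_end s \<in> walk_points ss'" using cover_sub[OF s(1)] end_in_cover[of s] by blast
    then show "v \<in> W" using s wp' unfolding W_def by simp
  qed
  obtain vs0 where v0: "vs0 \<noteq> []" "hd vs0 = a" "last vs0 = a" "successively E vs0"
    "set vs0 = insert a (ends ss')" "real (length vs0 - 1) \<le> sum_list (map (wt W) ss') + (if b \<in> W then 0 else 0)"
    using disc[OF sE wk ab(1) _ _ ab(2) eW] by auto
  have Wsub: "W \<subseteq> set vs0"
  proof
    fix w assume "w \<in> W"
    then have "Vert w \<in> walk_points ss'" using wp' W_def by simp
    then obtain j where j: "j < length ss'" "step_start (ss' ! j) = Vert w" using vert_is_start[OF cy'] by blast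
    show "w \<in> set vs0"
    proof (cases j)
      case 0
      then have "Vert w = Vert a" using j hd' ss'ne by (simp add: hd_conv_nth)
      then show ?thesis using v0(5) by simp
    next
      case (Suc j')
      have "step_end (ss' ! j') = step_start (ss' ! (Suc j' mod length ss'))" using cy' j Suc by (auto simp: cyc_def)
      then have "step_end (ss' ! j') = Vert w" using j Suc by simp
      moreover have "ss' ! j' \<in> set ss'" using j Suc by simp
      ultimately have "w \<in> ends ss'" unfolding ends_def by blast
      then show ?thesis using v0(5) by simp
    qed
  qed
  define Y where "Y = V - W"
  have finY: "finite Y" unfolding Y_def using finV by simp
  have nb: "\<exists>x\<in>set vs0. E x y \<and> E y x" if y: "y \<in> Y" for y
  proof -
    have yV: "y \<in> V" and yW: "y \<notin> W" using y unfolding Y_def by auto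
    have "card {w. E y w} = 3" using cu yV by (simp add: cubic_def)
    then have "{w. E y w} \<noteq> {}" by (metis card.empty zero_neq_numeral)
    then obtain x where x: "E y x" by blast
    have "Vert y \<in> walk_points ss \<or> Vert x \<in> walk_points ss" by (rule vcover[OF sg cg cu dt x])
    then have "x \<in> W" using yW unfolding W_def by simp
    then show ?thesis using Wsub x sym[OF x] by blast
  qed
  obtain vs where vs: "successively E vs" "vs \<noteq> []" "hd vs = last vs" "set vs = set vs0 \<union> Y"
    "length vs = length vs0 + 2 * card Y"
    using add_detours[OF finY v0(4) v0(1) _ nb] v0(2,3) by auto
  have tour: "tsp_tour V E vs"
    unfolding tsp_tour_def using vs Wsub unfolding Y_def successively_conv_nth by blast
  have sums: "sum_list (map (wt W) ss) + (\<Sum>y\<in>Y. sum_list (map (omy y) ss)) \<le> K"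
  proof -
    have "sum_list (map (\<lambda>s. wt W s + (\<Sum>y\<in>Y. omy y s)) ss) \<le> sum_list (map step_len ss)"
    proof (rule sum_list_mono)
      fix s assume s: "s \<in> set ss"
      obtain u v l m where sd: "s = (u, v, l, m)" by (cases s)
      have "valid_step E s" using cy s by (auto simp: cyc_def)
      then have e: "E u v" by (simp add: sd valid_step_def)
      have uvV: "u \<in> V" "v \<in> V" using sg_E[OF sg e] by auto
      have "Vert u \<in> walk_points ss \<or> Vert v \<in> walk_points ss" by (rule vcover[OF sg cg cu dt e])
      then have "u \<in> W \<or> v \<in> W" unfolding W_def by simp
      then show "wt W s + (\<Sum>y\<in>Y. omy y s) \<le> step_len s"
        unfolding sd using len_split[OF finY uvV Y_def] by blast
    qed
    then show ?thesis using K unfolding walk_length_def by (simp add: sum_list_addf sum_list_sum_swap)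
  qed
  have per: "2 \<le> sum_list (map (omy y) ss)" if "y \<in> Y" for y
  proof -
    have "y \<in> V" "Vert y \<notin> walk_points ss" using that unfolding Y_def W_def by auto
    from per_y[OF sg cg cu dt cy this] show ?thesis by (simp add: sum_idx)
  qed
  have "(\<Sum>y\<in>Y. 2) \<le> (\<Sum>y\<in>Y. sum_list (map (omy y) ss))" by (rule sum_mono) (rule per)
  then have "2 * real (card Y) \<le> (\<Sum>y\<in>Y. sum_list (map (omy y) ss))" by simp
  moreover have "sum_list (map (wt W) ss') = sum_list (map (wt W) ss)" unfolding ss'_def by (rule sum_list_rotate_map)
  moreover have "real (length vs - 1) = real (length vs0 - 1) + 2 * real (card Y)"
  proof -
    have "length vs0 \<ge> 1" using v0(1) by (cases vs0) auto
    then show ?thesis using vs(5) by (simp add: of_nat_diff)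
  qed
  ultimately have "real (tsp_length vs) \<le> K" unfolding tsp_length_def using v0(6) sums by simp
  then show ?thesis using tour by blast
qed

theorem mainTheorem15:
  fixes V :: "'a::linorder set" and E :: "'a \<Rightarrow> 'a \<Rightarrow> bool" and K :: real
  assumes "simple_graph V E" and "connected_graph V E" and "cubic V E" and "bipartite V E"
  shows "(\<exists>vs. tsp_tour V E vs \<and> real (tsp_length vs) \<le> K)
     \<longleftrightarrow> (\<exists>ss. delta_tour E (1/2) ss \<and> walk_length ss = K)"
proof
  assume "\<exists>vs. tsp_tour V E vs \<and> real (tsp_length vs) \<le> K"
  then obtain vs where "tsp_tour V E vs" "real (tsp_length vs) \<le> K" by blast
  then show "\<exists>ss. delta_tour E (1/2) ss \<and> walk_length ss = K"
    using easy_dir[OF assms(1-3)] by blast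
next
  assume "\<exists>ss. delta_tour E (1/2) ss \<and> walk_length ss = K"
  then obtain ss where "delta_tour E (1/2) ss" "walk_length ss = K" by blast
  then show "\<exists>vs. tsp_tour V E vs \<and> real (tsp_length vs) \<le> K"
    using hard_dir[OF assms(1-3)] by blast
qed

end
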